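(* Let $\mathcal H$ be a finite-dimensional Hilbert space, $|\theta\rangle\in\mathcal H$ a pure state, $0\le r\le n/2$, and $\varrho_n\in\mathrm{conv}(|\theta\rangle^{[\otimes,n,r]})$. Let $\mathcal M=\{M_w\}_{w\in W}$ be a POVM on $\mathcal H$ with finite outcome set $W$, let $P_{\mathcal M}(|\theta\rangle\langle\theta|)=\{\langle\theta|M_w|\theta\rangle\}_{w\in W}$, and let $P_{\mathcal M}[\varrho_n]$ be the relative frequency distribution of outcomes of $\mathcal M^{\otimes n}$ applied to $\varrho_n$. Then for every $\delta>0$, $$\Pr\Big(\big\|P_{\mathcal M}(|\theta\rangle\langle\theta|)-P_{\mathcal M}[\varrho_n]\big\|>\delta\Big)\le 2^{-n\left[\frac{\delta^2}{4}-H\left(\frac rn\right)\right]+|W|\log\left(\frac n2+1\right)},$$ where the probability is over the measurement outcomes.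
   Context: For $0\le r\le N$, $\mathrm{Sym}(\mathcal H^{\otimes N})$ is the symmetric subspace, $\mathcal V(\mathcal H^{\otimes N},|\theta\rangle^{\otimes N-r})=\{\pi(|\theta\rangle^{\otimes N-r}\otimes|\psi_r\rangle):\pi\in S_N,\ |\psi_r\rangle\in\mathcal H^{\otimes r}\}$, $|\theta\rangle^{[\otimes,N,r]}:=\mathrm{Sym}(\mathcal H^{\otimes N})\cap\mathrm{span}(\mathcal V(\mathcal H^{\otimes N},|\theta\rangle^{\otimes N-r}))$ (almost power states along $|\theta\rangle$), and $\mathrm{conv}(|\theta\rangle^{[\otimes,N,r]})$ is the set of mixtures of such pure states. $\|\cdot\|$ on distributions is the $\ell_1$ distance, $H$ is the binary entropy, $\log$ is base 2. *)

theory Defs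
  imports Complex_Main "HOL-Combinatorics.Permutations"
begin

text \<open>The Hilbert space H is C^d (d \<ge> 1); a vector of H is a function
  nat \<Rightarrow> complex, only its values on indices < d matter. A vector of H^{\<otimes>N} is a function
  nat list \<Rightarrow> complex, only its values on the multi-indices in idx d N matter.\<close>

definition idx :: "nat \<Rightarrow> nat \<Rightarrow> nat list set" where
  "idx d N = {xs. length xs = N \<and> set xs \<subseteq> {..<d}}"

definition hinner :: "nat \<Rightarrow> (nat \<Rightarrow> complex) \<Rightarrow> (nat \<Rightarrow> complex) \<Rightarrow> complex" where
  "hinner d u v = (\<Sum>i<d. cnj (u i) * v i)"

definition tinner :: "nat \<Rightarrow> nat \<Rightarrow> (nat list \<Rightarrow> complex) \<Rightarrow> (nat list \<Rightarrow> complex) \<Rightarrow> complex" where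
  "tinner d N u v = (\<Sum>xs\<in>idx d N. cnj (u xs) * v xs)"

definition power_tensor :: "(nat \<Rightarrow> complex) \<Rightarrow> nat \<Rightarrow> (nat list \<Rightarrow> complex) \<Rightarrow> (nat list \<Rightarrow> complex)" where
  "power_tensor \<theta> k \<psi> = (\<lambda>xs. (\<Prod>i<k. \<theta> (xs ! i)) * \<psi> (drop k xs))"

definition perm_vec :: "(nat \<Rightarrow> nat) \<Rightarrow> (nat list \<Rightarrow> complex) \<Rightarrow> (nat list \<Rightarrow> complex)" where
  "perm_vec \<pi> v = (\<lambda>xs. v (permute_list \<pi> xs))"

definition Vset :: "nat \<Rightarrow> (nat \<Rightarrow> complex) \<Rightarrow> nat \<Rightarrow> nat \<Rightarrow> (nat list \<Rightarrow> complex) set" where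
  "Vset d \<theta> N r = {perm_vec \<pi> (power_tensor \<theta> (N - r) \<psi>) | \<pi> \<psi>. \<pi> permutes {..<N}}"

definition in_tspan :: "nat \<Rightarrow> nat \<Rightarrow> (nat list \<Rightarrow> complex) set \<Rightarrow> (nat list \<Rightarrow> complex) \<Rightarrow> bool" where
  "in_tspan d N S v \<longleftrightarrow> (\<exists>F c. finite F \<and> F \<subseteq> S \<and>
      (\<forall>xs\<in>idx d N. v xs = (\<Sum>u\<in>F. c u * u xs)))"

definition symmetric_vec :: "nat \<Rightarrow> nat \<Rightarrow> (nat list \<Rightarrow> complex) \<Rightarrow> bool" where
  "symmetric_vec d N v \<longleftrightarrow> (\<forall>\<pi>. \<pi> permutes {..<N} \<longrightarrow> (\<forall>xs\<in>idx d N. perm_vec \<pi> v xs = v xs))"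

definition almost_power :: "nat \<Rightarrow> (nat \<Rightarrow> complex) \<Rightarrow> nat \<Rightarrow> nat \<Rightarrow> (nat list \<Rightarrow> complex) set" where
  "almost_power d \<theta> N r = {v. symmetric_vec d N v \<and> in_tspan d N (Vset d \<theta> N r) v}"

definition is_POVM :: "nat \<Rightarrow> 'w set \<Rightarrow> ('w \<Rightarrow> nat \<Rightarrow> nat \<Rightarrow> complex) \<Rightarrow> bool" where
  "is_POVM d W M \<longleftrightarrow> finite W \<and> W \<noteq> {} \<and>
     (\<forall>w\<in>W. \<forall>v. (\<Sum>i<d. \<Sum>j<d. cnj (v i) * M w i j * v j) \<in> \<real> \<and>
                  Re (\<Sum>i<d. \<Sum>j<d. cnj (v i) * M w i j * v j) \<ge> 0) \<and>
     (\<forall>i<d. \<forall>j<d. (\<Sum>w\<in>W. M w i j) = (if i = j then 1 else 0))"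

definition outcome_dist :: "nat \<Rightarrow> ('w \<Rightarrow> nat \<Rightarrow> nat \<Rightarrow> complex) \<Rightarrow> (nat \<Rightarrow> complex) \<Rightarrow> 'w \<Rightarrow> real" where
  "outcome_dist d M \<theta> w = Re (\<Sum>i<d. \<Sum>j<d. cnj (\<theta> i) * M w i j * \<theta> j)"

definition born_prob :: "nat \<Rightarrow> nat \<Rightarrow> ('w \<Rightarrow> nat \<Rightarrow> nat \<Rightarrow> complex) \<Rightarrow> 'w list \<Rightarrow> (nat list \<Rightarrow> complex) \<Rightarrow> real" where
  "born_prob d n M ws \<phi> = Re (\<Sum>xs\<in>idx d n. \<Sum>ys\<in>idx d n.
      cnj (\<phi> xs) * (\<Prod>i<n. M (ws ! i) (xs ! i) (ys ! i)) * \<phi> ys)"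

definition rel_freq :: "'w list \<Rightarrow> 'w \<Rightarrow> real" where
  "rel_freq ws w = real (count_list ws w) / real (length ws)"

definition l1_dist :: "'w set \<Rightarrow> ('w \<Rightarrow> real) \<Rightarrow> ('w \<Rightarrow> real) \<Rightarrow> real" where
  "l1_dist W p q = (\<Sum>w\<in>W. \<bar>p w - q w\<bar>)"

definition bin_entropy :: "real \<Rightarrow> real" where
  "bin_entropy x = (if x \<le> 0 \<or> x \<ge> 1 then 0 else - x * log 2 x - (1 - x) * log 2 (1 - x))"

end

theory Submission
  imports Defs "HOL-Probability.Hoeffding"
begin

definition lists_of :: "'a set \<Rightarrow> nat \<Rightarrow> 'a list set" where
  "lists_of D n = {xs. length xs = n \<and> set xs \<subseteq> D}"

lemma idx_lists: "idx d n = lists_of {..<d} n"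
  by (simp add: idx_def lists_of_def)

lemma finite_lists_of: "finite D \<Longrightarrow> finite (lists_of D n)"
  unfolding lists_of_def using finite_lists_length_eq[of D n] by (simp add: conj_commute)

lemma lists_of_Suc: "lists_of D (Suc n) = (\<lambda>(y,ys). y # ys) ` (D \<times> lists_of D n)"
proof -
  have "xs \<in> (\<lambda>(y,ys). y # ys) ` (D \<times> lists_of D n)" if "xs \<in> lists_of D (Suc n)" for xs
    using that by (cases xs) (auto simp: lists_of_def)
  then show ?thesis by (auto simp: lists_of_def)
qed

lemma sum_prod_lists:
  assumes "finite D"
  shows "(\<Sum>ys\<in>lists_of D n. \<Prod>i<n. g i (ys!i)) = (\<Prod>i<n. \<Sum>y\<in>D. (g i y :: 'b::comm_semiring_1))"
proof (induction n arbitrary: g)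
  case 0
  have "lists_of D 0 = {[]}" by (auto simp: lists_of_def)
  then show ?case by simp
next
  case (Suc n)
  have inj: "inj_on (\<lambda>(y,ys). y # ys) (D \<times> lists_of D n)" by (auto simp: inj_on_def)
  have "(\<Sum>ys\<in>lists_of D (Suc n). \<Prod>i<Suc n. g i (ys!i))
      = (\<Sum>(y,ys)\<in>D \<times> lists_of D n. \<Prod>i<Suc n. g i ((y#ys)!i))"
    unfolding lists_of_Suc by (subst sum.reindex[OF inj]) (simp add: case_prod_unfold)
  also have "\<dots> = (\<Sum>(y,ys)\<in>D \<times> lists_of D n. g 0 y * (\<Prod>i<n. g (Suc i) (ys!i)))"
    by (intro sum.cong refl) (auto simp del: prod.lessThan_Suc simp add: prod.lessThan_Suc_shift)
  also have "\<dots> = (\<Sum>y\<in>D. g 0 y) * (\<Sum>ys\<in>lists_of D n. \<Prod>i<n. g (Suc i) (ys!i))"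
    by (simp add: sum.cartesian_product[symmetric] sum_product)
  also have "\<dots> = (\<Sum>y\<in>D. g 0 y) * (\<Prod>i<n. \<Sum>y\<in>D. g (Suc i) y)"
    using Suc[of "\<lambda>i. g (Suc i)"] by simp
  also have "\<dots> = (\<Prod>i<Suc n. \<Sum>y\<in>D. g i y)"
    by (simp del: prod.lessThan_Suc add: prod.lessThan_Suc_shift)
  finally show ?case .
qed

lemma idx_nth_less: "xs \<in> idx d n \<Longrightarrow> i < n \<Longrightarrow> xs ! i < d"
  unfolding idx_def using nth_mem by fastforce

lemma finite_idx: "finite (idx d n)"
  by (simp add: idx_lists finite_lists_of)

definition form :: "nat \<Rightarrow> nat \<Rightarrow> (nat \<Rightarrow> nat \<Rightarrow> nat \<Rightarrow> complex) \<Rightarrow> (nat list \<Rightarrow> complex) \<Rightarrow> complex" where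
  "form d n C v = (\<Sum>xs\<in>idx d n. \<Sum>ys\<in>idx d n. cnj (v xs) * (\<Prod>i<n. C i (xs!i) (ys!i)) * v ys)"

definition kvec :: "nat \<Rightarrow> nat \<Rightarrow> (nat \<Rightarrow> nat \<Rightarrow> nat \<Rightarrow> complex) \<Rightarrow> nat list \<Rightarrow> (nat list \<Rightarrow> complex) \<Rightarrow> complex" where
  "kvec d n E ks v = (\<Sum>ys\<in>idx d n. (\<Prod>i<n. E i (ks!i) (ys!i)) * v ys)"

lemma born_form: "born_prob d n M ws \<phi> = Re (form d n (\<lambda>i. M (ws!i)) \<phi>)"
  by (simp add: born_prob_def form_def)

lemma form_kraus:
  assumes "\<And>i x y. i < n \<Longrightarrow> x < d \<Longrightarrow> y < d \<Longrightarrow> C i x y = (\<Sum>k<d. cnj (E i k x) * E i k y)"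
  shows "form d n C v = of_real (\<Sum>ks\<in>idx d n. (cmod (kvec d n E ks v))\<^sup>2)"
proof -
  have "form d n C v = (\<Sum>xs\<in>idx d n. \<Sum>ys\<in>idx d n. cnj (v xs) *
          (\<Sum>ks\<in>idx d n. \<Prod>i<n. cnj (E i (ks!i) (xs!i)) * E i (ks!i) (ys!i)) * v ys)"
  proof -
    have "(\<Prod>i<n. C i (xs!i) (ys!i)) = (\<Sum>ks\<in>idx d n. \<Prod>i<n. cnj (E i (ks!i) (xs!i)) * E i (ks!i) (ys!i))"
      if "xs \<in> idx d n" "ys \<in> idx d n" for xs ys
    proof -
      have "(\<Prod>i<n. C i (xs!i) (ys!i)) = (\<Prod>i<n. \<Sum>k<d. cnj (E i k (xs!i)) * E i k (ys!i))"
        using that by (intro prod.cong refl assms) (auto simp: idx_nth_less)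
      also have "\<dots> = (\<Sum>ks\<in>idx d n. \<Prod>i<n. cnj (E i (ks!i) (xs!i)) * E i (ks!i) (ys!i))"
        unfolding idx_lists by (rule sum_prod_lists[symmetric]) simp
      finally show ?thesis .
    qed
    then show ?thesis unfolding form_def by (intro sum.cong refl) auto
  qed
  also have "\<dots> = (\<Sum>xs\<in>idx d n. \<Sum>ks\<in>idx d n. \<Sum>ys\<in>idx d n. cnj (v xs) *
          (\<Prod>i<n. cnj (E i (ks!i) (xs!i)) * E i (ks!i) (ys!i)) * v ys)"
    by (rule sum.cong[OF refl]) (simp only: sum_distrib_left sum_distrib_right, rule sum.swap)
  also have "\<dots> = (\<Sum>ks\<in>idx d n. \<Sum>xs\<in>idx d n. \<Sum>ys\<in>idx d n. cnj (v xs) *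
          (\<Prod>i<n. cnj (E i (ks!i) (xs!i)) * E i (ks!i) (ys!i)) * v ys)"
    by (rule sum.swap)
  also have "\<dots> = (\<Sum>ks\<in>idx d n. cnj (kvec d n E ks v) * kvec d n E ks v)"
    unfolding kvec_def cnj_sum complex_cnj_mult cnj_prod sum_product
    by (intro sum.cong refl) (simp add: prod.distrib mult_ac)
  also have "\<dots> = of_real (\<Sum>ks\<in>idx d n. (cmod (kvec d n E ks v))\<^sup>2)"
    by (simp add: complex_norm_square[symmetric] mult.commute)
  finally show ?thesis .
qed

lemma sum_swap4:
  "(\<Sum>x\<in>A. \<Sum>y\<in>B. \<Sum>a\<in>C. \<Sum>b\<in>D. f x y a b) = (\<Sum>a\<in>C. \<Sum>b\<in>D. \<Sum>x\<in>A. \<Sum>y\<in>B. f x y a b)"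
proof -
  have "(\<Sum>x\<in>A. \<Sum>y\<in>B. \<Sum>a\<in>C. \<Sum>b\<in>D. f x y a b) = (\<Sum>x\<in>A. \<Sum>a\<in>C. \<Sum>y\<in>B. \<Sum>b\<in>D. f x y a b)"
    by (rule sum.cong[OF refl], rule sum.swap)
  also have "\<dots> = (\<Sum>a\<in>C. \<Sum>x\<in>A. \<Sum>y\<in>B. \<Sum>b\<in>D. f x y a b)" by (rule sum.swap)
  also have "\<dots> = (\<Sum>a\<in>C. \<Sum>x\<in>A. \<Sum>b\<in>D. \<Sum>y\<in>B. f x y a b)"
    by (rule sum.cong[OF refl], rule sum.cong[OF refl], rule sum.swap)
  also have "\<dots> = (\<Sum>a\<in>C. \<Sum>b\<in>D. \<Sum>x\<in>A. \<Sum>y\<in>B. f x y a b)"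
    by (rule sum.cong[OF refl], rule sum.swap)
  finally show ?thesis .
qed

lemma sum_prod_idx:
  "(\<Sum>ys\<in>idx d n. \<Prod>i<n. g i (ys!i)) = (\<Prod>i<n. \<Sum>y<d. (g i y :: 'b::comm_semiring_1))"
  unfolding idx_lists by (rule sum_prod_lists) simp

lemma sum2_prod_idx:
  "(\<Sum>xs\<in>idx d n. \<Sum>ys\<in>idx d n. \<Prod>i<n. f i (xs!i) (ys!i)) = (\<Prod>i<n. \<Sum>x<d. \<Sum>y<d. (f i x y :: 'b::comm_semiring_1))"
proof -
  have "(\<Sum>xs\<in>idx d n. \<Sum>ys\<in>idx d n. \<Prod>i<n. f i (xs!i) (ys!i)) = (\<Sum>xs\<in>idx d n. \<Prod>i<n. \<Sum>y<d. f i (xs!i) y)"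
    by (rule sum.cong[OF refl], rule sum_prod_idx)
  also have "\<dots> = (\<Prod>i<n. \<Sum>x<d. \<Sum>y<d. f i x y)"
    by (rule sum_prod_idx)
  finally show ?thesis .
qed

lemma form_sum_lists:
  assumes "finite W"
  shows "(\<Sum>ws\<in>lists_of W n. (\<Prod>i<n. z i (ws!i)) * form d n (\<lambda>i. C i (ws!i)) v)
       = form d n (\<lambda>i x y. \<Sum>w\<in>W. z i w * C i w x y) v"
proof -
  have "(\<Sum>ws\<in>lists_of W n. (\<Prod>i<n. z i (ws!i)) * form d n (\<lambda>i. C i (ws!i)) v)
      = (\<Sum>ws\<in>lists_of W n. \<Sum>xs\<in>idx d n. \<Sum>ys\<in>idx d n.
           cnj (v xs) * (\<Prod>i<n. z i (ws!i) * C i (ws!i) (xs!i) (ys!i)) * v ys)"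
    unfolding form_def sum_distrib_left
    by (intro sum.cong refl) (simp add: prod.distrib mult_ac)
  also have "\<dots> = (\<Sum>xs\<in>idx d n. \<Sum>ys\<in>idx d n. \<Sum>ws\<in>lists_of W n.
           cnj (v xs) * (\<Prod>i<n. z i (ws!i) * C i (ws!i) (xs!i) (ys!i)) * v ys)"
    by (subst sum.swap, rule sum.cong[OF refl], rule sum.swap)
  also have "\<dots> = (\<Sum>xs\<in>idx d n. \<Sum>ys\<in>idx d n.
           cnj (v xs) * (\<Sum>ws\<in>lists_of W n. \<Prod>i<n. z i (ws!i) * C i (ws!i) (xs!i) (ys!i)) * v ys)"
    by (simp add: sum_distrib_left sum_distrib_right)
  also have "\<dots> = form d n (\<lambda>i x y. \<Sum>w\<in>W. z i w * C i w x y) v"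
  proof -
    have "(\<Sum>ws\<in>lists_of W n. \<Prod>i<n. z i (ws!i) * C i (ws!i) (xs!i) (ys!i))
        = (\<Prod>i<n. \<Sum>w\<in>W. z i w * C i w (xs!i) (ys!i))" for xs ys
      by (rule sum_prod_lists[OF assms])
    then show ?thesis unfolding form_def by simp
  qed
  finally show ?thesis .
qed

definition sw :: "nat \<Rightarrow> (nat \<Rightarrow> nat \<Rightarrow> complex) \<Rightarrow> (nat \<Rightarrow> nat \<Rightarrow> complex) \<Rightarrow> nat \<Rightarrow> nat \<Rightarrow> complex" where
  "sw d K C a b = (\<Sum>x<d. \<Sum>y<d. cnj (K x a) * C x y * K y b)"

definition opv :: "nat \<Rightarrow> nat \<Rightarrow> (nat \<Rightarrow> nat \<Rightarrow> nat \<Rightarrow> complex) \<Rightarrow> (nat list \<Rightarrow> complex) \<Rightarrow> nat list \<Rightarrow> complex" where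
  "opv d n Kf v = (\<lambda>xs. \<Sum>ys\<in>idx d n. (\<Prod>i<n. Kf i (xs!i) (ys!i)) * v ys)"

lemma form_opv: "form d n C (opv d n Kf v) = form d n (\<lambda>i. sw d (Kf i) (C i)) v"
proof -
  have "form d n C (opv d n Kf v) = (\<Sum>xs\<in>idx d n. \<Sum>ys\<in>idx d n. \<Sum>as\<in>idx d n. \<Sum>bs\<in>idx d n.
      cnj (v as) * (\<Prod>i<n. cnj (Kf i (xs!i) (as!i)) * C i (xs!i) (ys!i) * Kf i (ys!i) (bs!i)) * v bs)"
    unfolding form_def opv_def cnj_sum complex_cnj_mult cnj_prod sum_distrib_right
    unfolding sum_distrib_left
    by (intro sum.cong refl) (simp add: prod.distrib mult_ac)
  also have "\<dots> = (\<Sum>as\<in>idx d n. \<Sum>bs\<in>idx d n. \<Sum>xs\<in>idx d n. \<Sum>ys\<in>idx d n.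
      cnj (v as) * (\<Prod>i<n. cnj (Kf i (xs!i) (as!i)) * C i (xs!i) (ys!i) * Kf i (ys!i) (bs!i)) * v bs)"
    by (rule sum_swap4)
  also have "\<dots> = (\<Sum>as\<in>idx d n. \<Sum>bs\<in>idx d n.
      cnj (v as) * (\<Sum>xs\<in>idx d n. \<Sum>ys\<in>idx d n. \<Prod>i<n. cnj (Kf i (xs!i) (as!i)) * C i (xs!i) (ys!i) * Kf i (ys!i) (bs!i)) * v bs)"
    by (simp add: sum_distrib_left sum_distrib_right)
  also have "\<dots> = form d n (\<lambda>i. sw d (Kf i) (C i)) v"
  proof -
    have "(\<Sum>xs\<in>idx d n. \<Sum>ys\<in>idx d n. \<Prod>i<n. cnj (Kf i (xs!i) (as!i)) * C i (xs!i) (ys!i) * Kf i (ys!i) (bs!i))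
       = (\<Prod>i<n. \<Sum>x<d. \<Sum>y<d. cnj (Kf i x (as!i)) * C i x y * Kf i y (bs!i))" for as bs
      by (rule sum2_prod_idx)
    then show ?thesis unfolding form_def sw_def by simp
  qed
  finally show ?thesis .
qed

definition qf :: "nat \<Rightarrow> (nat \<Rightarrow> nat \<Rightarrow> complex) \<Rightarrow> (nat \<Rightarrow> complex) \<Rightarrow> complex" where
  "qf d M v = (\<Sum>i<d. \<Sum>j<d. cnj (v i) * M i j * v j)"

definition psd :: "nat \<Rightarrow> (nat \<Rightarrow> nat \<Rightarrow> complex) \<Rightarrow> bool" where
  "psd d M \<longleftrightarrow> (\<forall>v. qf d M v \<in> \<real> \<and> Re (qf d M v) \<ge> 0)"

lemma if0_simps:
  "x * (if P then a else 0) = (if P then x * a else 0)"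
  "(if P then a else 0) * x = (if P then a * x else 0)"
  "cnj (if P then a else 0) = (if P then cnj a else 0)"
  for x a :: complex
  by auto

lemma sum_if_const: "(\<Sum>j\<in>A. if P then f j else 0) = (if P then (\<Sum>j\<in>A. f j) else 0)"
  by auto

lemma qf_two:
  assumes "i < d" "j < d" "i \<noteq> j"
  shows "qf d M (\<lambda>k. if k = i then a else if k = j then b else 0)
       = cnj a * M i i * a + cnj a * M i j * b + cnj b * M j i * a + cnj b * M j j * b"
proof -
  have e: "(\<lambda>k. if k = i then a else if k = j then b else 0) = (\<lambda>k. (if k = i then a else 0) + (if k = j then b else 0))"
    using assms by auto
  show ?thesis unfolding qf_def e
    using assms by (simp add: distrib_left distrib_right sum.distrib if0_simps sum.delta sum_if_const)
qed

lemma qf_one: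
  assumes "i < d"
  shows "qf d M (\<lambda>k. if k = i then a else 0) = cnj a * M i i * a"
  unfolding qf_def using assms by (simp add: if0_simps sum.delta)

lemma psd_real_diag:
  assumes "psd d M" "i < d"
  shows "M i i \<in> \<real>" "Re (M i i) \<ge> 0"
proof -
  have "qf d M (\<lambda>k. if k = i then 1 else 0) = M i i" using qf_one[OF assms(2)] by simp
  then show "M i i \<in> \<real>" "Re (M i i) \<ge> 0" using assms(1) unfolding psd_def by metis+
qed

lemma psd_herm:
  assumes "psd d M" "i < d" "j < d"
  shows "M i j = cnj (M j i)"
proof (cases "i = j")
  case True
  then show ?thesis using psd_real_diag[OF assms(1,2)] by (simp add: Reals_cnj_iff)
next
  case False
  have ri: "Im (M i i) = 0" and rj: "Im (M j j) = 0"
    using psd_real_diag[OF assms(1,2)] psd_real_diag[OF assms(1,3)] by (auto simp: complex_is_Real_iff)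
  have "qf d M (\<lambda>k. if k = i then 1 else if k = j then 1 else 0) \<in> \<real>"
    using assms(1) unfolding psd_def by blast
  then have 1: "Im (M i i + M i j + M j i + M j j) = 0"
    using qf_two[OF assms(2,3) False, of M 1 1] by (simp add: complex_is_Real_iff)
  have "qf d M (\<lambda>k. if k = i then 1 else if k = j then \<i> else 0) \<in> \<real>"
    using assms(1) unfolding psd_def by blast
  then have 2: "Im (M i i + \<i> * M i j - \<i> * M j i + M j j) = 0"
    using qf_two[OF assms(2,3) False, of M 1 \<i>] by (simp add: complex_is_Real_iff algebra_simps)
  show ?thesis using 1 2 ri rj by (simp add: complex_eq_iff)
qed

lemma qf_Suc:
  "qf (Suc d) M v = qf d M v + (\<Sum>i<d. cnj (v i) * M i d) * v d + cnj (v d) * (\<Sum>j<d. M d j * v j)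
     + cnj (v d) * M d d * v d"
  unfolding qf_def by (simp add: sum.distrib sum_distrib_left sum_distrib_right algebra_simps)

lemma qf_cong: "(\<And>k. k < d \<Longrightarrow> v k = w k) \<Longrightarrow> qf d M v = qf d M w"
  unfolding qf_def by (intro sum.cong refl) auto

lemma psd_zero_row:
  assumes psd: "psd (Suc d) M" and a0: "M d d = 0" and j: "j < d"
  shows "M d j = 0"
proof (rule ccontr)
  assume m0: "M d j \<noteq> 0"
  define m where "m = M d j"
  have herm: "M j d = cnj m" using psd_herm[OF psd, of j d] j by (simp add: m_def)
  have rj: "M j j = of_real (Re (M j j))" "Re (M j j) \<ge> 0"
    using psd_real_diag[OF psd, of j] j by (auto simp: complex_is_Real_iff complex_eq_iff)
  define mjj where "mjj = Re (M j j)"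
  define t :: real where "t = 1 / (mjj + 1)"
  have t0: "t > 0" using rj by (simp add: t_def mjj_def)
  have tm: "t * mjj < 1" using rj by (simp add: t_def mjj_def field_simps)
  define \<alpha> where "\<alpha> = - of_real t * cnj m"
  have "qf (Suc d) M (\<lambda>k. if k = j then \<alpha> else if k = d then 1 else 0)
        = cnj \<alpha> * M j j * \<alpha> + cnj \<alpha> * M j d * 1 + cnj 1 * M d j * \<alpha> + cnj 1 * M d d * 1"
    using j by (intro qf_two) auto
  also have "\<dots> = of_real (t * t * mjj * (cmod m)\<^sup>2 - 2 * t * (cmod m)\<^sup>2)"
    using rj a0 herm unfolding \<alpha>_def mjj_def m_def
    by (simp add: algebra_simps power2_eq_square complex_norm_square[symmetric]
          flip: complex_norm_square)
  finally have "Re (qf (Suc d) M (\<lambda>k. if k = j then \<alpha> else if k = d then 1 else 0))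
      = t * t * mjj * (cmod m)\<^sup>2 - 2 * t * (cmod m)\<^sup>2" by simp
  also have "\<dots> = t * (cmod m)\<^sup>2 * (t * mjj - 2)" by (simp add: algebra_simps)
  finally have "Re (qf (Suc d) M (\<lambda>k. if k = j then \<alpha> else if k = d then 1 else 0))
      = t * (cmod m)\<^sup>2 * (t * mjj - 2)" .
  moreover have "Re (qf (Suc d) M (\<lambda>k. if k = j then \<alpha> else if k = d then 1 else 0)) \<ge> 0"
    using psd unfolding psd_def by blast
  moreover have "t * (cmod m)\<^sup>2 > 0" using t0 m0 by (simp add: m_def)
  ultimately have "t * mjj - 2 \<ge> 0"
    by (metis zero_le_mult_iff linorder_not_le)
  then show False using tm by simp
qed

lemma psd_kraus:
  "psd d M \<Longrightarrow> \<exists>B. \<forall>i<d. \<forall>j<d. M i j = (\<Sum>k<d. cnj (B k i) * B k j)"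
proof (induction d arbitrary: M)
  case 0
  then show ?case by simp
next
  case (Suc d)
  note psd = Suc.prems
  have herm: "M i j = cnj (M j i)" if "i < Suc d" "j < Suc d" for i j
    using psd_herm[OF psd that] .
  have ra: "M d d = of_real (Re (M d d))" "Re (M d d) \<ge> 0"
    using psd_real_diag[OF psd, of d] by (auto simp: complex_is_Real_iff complex_eq_iff)
  define ar where "ar = Re (M d d)"
  show ?case
  proof (cases "ar = 0")
    case True
    then have a0: "M d d = 0" using ra by (simp add: ar_def)
    have row0: "M d j = 0" if "j < Suc d" for j
      using psd_zero_row[OF psd a0] a0 that by (cases "j = d") auto
    have col0: "M j d = 0" if "j < Suc d" for j
      using herm[OF that, of d] row0[OF that] by simp
    have "psd d M"
      unfolding psd_def
    proof
      fix v
      have "qf (Suc d) M (\<lambda>k. if k < d then v k else 0) = qf d M v"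
        by (subst qf_Suc) (auto intro: qf_cong)
      then show "qf d M v \<in> \<real> \<and> 0 \<le> Re (qf d M v)" using psd unfolding psd_def by metis
    qed
    then obtain B' where B': "\<forall>i<d. \<forall>j<d. M i j = (\<Sum>k<d. cnj (B' k i) * B' k j)"
      using Suc.IH by blast
    define B where "B k j = (if k < d \<and> j < d then B' k j else 0)" for k j
    have "M i j = (\<Sum>k<Suc d. cnj (B k i) * B k j)" if "i < Suc d" "j < Suc d" for i j
    proof (cases "i < d \<and> j < d")
      case True
      then show ?thesis using B' by (simp add: B_def)
    next
      case False
      then have "i = d \<or> j = d" using that by auto
      then show ?thesis using row0 col0 that by (auto simp: B_def)
    qed
    then show ?thesis by blast
  next
    case False
    then have ar0: "ar > 0" using ra by (simp add: ar_def)
    define c where "c j = M d j" for j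
    have Mid: "M i d = cnj (c i)" if "i < Suc d" for i
      using herm[OF that, of d] by (simp add: c_def)
    have cd: "c d = of_real ar" using ra by (simp add: c_def ar_def)
    define M' where "M' i j = M i j - cnj (c i) * c j / of_real ar" for i j
    have "psd d M'"
      unfolding psd_def
    proof
      fix v
      define s where "s = (\<Sum>j<d. c j * v j)"
      define v' where "v' k = (if k < d then v k else - s / of_real ar)" for k
      have v'd: "v' d = - s / of_real ar" by (simp add: v'_def)
      have q1: "qf d M v' = qf d M v" by (rule qf_cong) (simp add: v'_def)
      have s1: "(\<Sum>i<d. cnj (v' i) * M i d) = cnj s"
        unfolding s_def cnj_sum by (intro sum.cong refl) (simp add: v'_def Mid mult.commute)
      have s2: "(\<Sum>j<d. M d j * v' j) = s"
        unfolding s_def by (intro sum.cong refl) (simp add: v'_def c_def)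
      have "qf (Suc d) M v' = qf d M v - cnj s * s / of_real ar"
        unfolding qf_Suc q1 s1 s2 v'd using ar0 ra
        by (simp add: field_simps ar_def power2_eq_square)
      also have "qf d M v - cnj s * s / of_real ar = qf d M' v"
        unfolding qf_def M'_def s_def cnj_sum complex_cnj_mult sum_product
        by (simp add: sum_subtractf sum_divide_distrib algebra_simps)
      finally have "qf (Suc d) M v' = qf d M' v" .
      then show "qf d M' v \<in> \<real> \<and> 0 \<le> Re (qf d M' v)" using psd unfolding psd_def by metis
    qed
    then obtain B' where B': "\<forall>i<d. \<forall>j<d. M' i j = (\<Sum>k<d. cnj (B' k i) * B' k j)"
      using Suc.IH by blast
    define sq where "sq = complex_of_real (sqrt ar)"
    have sq2: "cnj sq * sq = of_real ar" using ar0
      by (simp add: sq_def flip: of_real_mult)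
    have sq0: "sq \<noteq> 0" using ar0 by (simp add: sq_def)
    define B where "B k j = (if k < d then (if j < d then B' k j else 0) else c j / sq)" for k j
    have last: "cnj (B d i) * B d j = cnj (c i) * c j / of_real ar" for i j
    proof -
      have "cnj (B d i) * B d j = cnj (c i) * c j / (cnj sq * sq)" by (simp add: B_def)
      then show ?thesis using sq2 by simp
    qed
    have "M i j = (\<Sum>k<Suc d. cnj (B k i) * B k j)" if i: "i < Suc d" and j: "j < Suc d" for i j
    proof -
      have sum_eq: "(\<Sum>k<Suc d. cnj (B k i) * B k j) = (\<Sum>k<d. cnj (B k i) * B k j) + cnj (c i) * c j / of_real ar"
        using last by simp
      show ?thesis
      proof (cases "i < d \<and> j < d")
        case True
        then have "(\<Sum>k<d. cnj (B k i) * B k j) = M' i j" using B' by (simp add: B_def)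
        then show ?thesis using sum_eq by (simp add: M'_def)
      next
        case False
        then have z: "(\<Sum>k<d. cnj (B k i) * B k j) = 0" by (auto simp: B_def)
        consider "i = d" | "j = d" using False i j by linarith
        then show ?thesis
        proof cases
          case 1
          then show ?thesis using z sum_eq cd ar0 by (simp add: c_def)
        next
          case 2
          then show ?thesis using z sum_eq cd ar0 Mid[OF i] by simp
        qed
      qed
    qed
    then show ?thesis by blast
  qed
qed

definition Idm :: "nat \<Rightarrow> nat \<Rightarrow> complex" where
  "Idm x y = (if x = y then 1 else 0)"

definition Qt :: "(nat \<Rightarrow> complex) \<Rightarrow> nat \<Rightarrow> nat \<Rightarrow> complex" where
  "Qt \<theta> x y = \<theta> x * cnj (\<theta> y)"

definition Qp :: "(nat \<Rightarrow> complex) \<Rightarrow> nat \<Rightarrow> nat \<Rightarrow> complex" where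
  "Qp \<theta> x y = Idm x y - Qt \<theta> x y"

definition Kb :: "(nat \<Rightarrow> complex) \<Rightarrow> bool \<Rightarrow> nat \<Rightarrow> nat \<Rightarrow> complex" where
  "Kb \<theta> b = (if b then Qp \<theta> else Qt \<theta>)"

definition norm2 :: "nat \<Rightarrow> nat \<Rightarrow> (nat list \<Rightarrow> complex) \<Rightarrow> real" where
  "norm2 d n v = (\<Sum>xs\<in>idx d n. (cmod (v xs))\<^sup>2)"

lemma prod_Idm:
  assumes "xs \<in> idx d n" "ys \<in> idx d n"
  shows "(\<Prod>i<n. Idm (xs!i) (ys!i)) = (if xs = ys then 1 else 0)"
proof (cases "xs = ys")
  case True
  then show ?thesis by (simp add: Idm_def)
next
  case False
  have "length xs = n" "length ys = n" using assms by (auto simp: idx_def)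
  then obtain i where "i < n" "xs ! i \<noteq> ys ! i" using False nth_equalityI by metis
  then show ?thesis using False by (auto simp: Idm_def intro!: prod_zero)
qed

lemma form_Idm: "form d n (\<lambda>i. Idm) v = of_real (norm2 d n v)"
proof -
  have "form d n (\<lambda>i. Idm) v = (\<Sum>xs\<in>idx d n. \<Sum>ys\<in>idx d n. if xs = ys then cnj (v xs) * v ys else 0)"
    unfolding form_def by (intro sum.cong refl) (simp add: prod_Idm)
  also have "\<dots> = (\<Sum>xs\<in>idx d n. cnj (v xs) * v xs)"
    by (simp add: sum.delta finite_idx)
  also have "\<dots> = of_real (norm2 d n v)"
    unfolding norm2_def by (simp add: complex_norm_square[symmetric] mult.commute)
  finally show ?thesis .
qed

lemma sum_Kb_prod:
  assumes "xs \<in> idx d n" "ys \<in> idx d n"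
  shows "(\<Sum>S\<in>Pow {..<n}. \<Prod>i<n. Kb \<theta> (i \<in> S) (xs!i) (ys!i)) = (if xs = ys then 1 else 0)"
proof -
  have "(\<Sum>S\<in>Pow {..<n}. \<Prod>i<n. Kb \<theta> (i \<in> S) (xs!i) (ys!i))
      = (\<Sum>S\<in>Pow {..<n}. (\<Prod>i\<in>S. Qp \<theta> (xs!i) (ys!i)) * (\<Prod>i\<in>{..<n} - S. Qt \<theta> (xs!i) (ys!i)))"
  proof (intro sum.cong refl)
    fix S assume "S \<in> Pow {..<n}"
    then have S: "S \<subseteq> {..<n}" by auto
    have "(\<Prod>i<n. Kb \<theta> (i \<in> S) (xs!i) (ys!i)) = (\<Prod>i<n. if i \<in> S then Qp \<theta> (xs!i) (ys!i) else Qt \<theta> (xs!i) (ys!i))"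
      by (intro prod.cong refl) (simp add: Kb_def)
    also have "\<dots> = (\<Prod>i\<in>{..<n} \<inter> {i. i \<in> S}. Qp \<theta> (xs!i) (ys!i)) * (\<Prod>i\<in>{..<n} \<inter> - {i. i \<in> S}. Qt \<theta> (xs!i) (ys!i))"
      by (rule prod.If_cases) simp
    also have "{..<n} \<inter> {i. i \<in> S} = S" using S by auto
    also have "{..<n} \<inter> - {i. i \<in> S} = {..<n} - S" by auto
    finally show "(\<Prod>i<n. Kb \<theta> (i \<in> S) (xs!i) (ys!i)) = (\<Prod>i\<in>S. Qp \<theta> (xs!i) (ys!i)) * (\<Prod>i\<in>{..<n} - S. Qt \<theta> (xs!i) (ys!i))" .
  qed
  also have "\<dots> = (\<Prod>i<n. Qp \<theta> (xs!i) (ys!i) + Qt \<theta> (xs!i) (ys!i))"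
    by (rule prod_add[symmetric]) simp
  also have "\<dots> = (\<Prod>i<n. Idm (xs!i) (ys!i))" by (simp add: Qp_def)
  also have "\<dots> = (if xs = ys then 1 else 0)" by (rule prod_Idm[OF assms])
  finally show ?thesis .
qed

lemma sum_projections:
  assumes "xs \<in> idx d n"
  shows "(\<Sum>S\<in>Pow {..<n}. opv d n (\<lambda>i. Kb \<theta> (i \<in> S)) v xs) = v xs"
proof -
  have "(\<Sum>S\<in>Pow {..<n}. opv d n (\<lambda>i. Kb \<theta> (i \<in> S)) v xs)
      = (\<Sum>ys\<in>idx d n. (\<Sum>S\<in>Pow {..<n}. \<Prod>i<n. Kb \<theta> (i \<in> S) (xs!i) (ys!i)) * v ys)"
    unfolding opv_def sum_distrib_right by (rule sum.swap)
  also have "\<dots> = (\<Sum>ys\<in>idx d n. (if xs = ys then v ys else 0))"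
    using assms by (intro sum.cong refl) (simp add: sum_Kb_prod)
  also have "\<dots> = v xs" using assms by (simp add: sum.delta finite_idx)
  finally show ?thesis .
qed

lemma form_sum_Kb:
  "(\<Sum>S\<in>Pow {..<n}. form d n (\<lambda>i. Kb \<theta> (i \<in> S)) v) = form d n (\<lambda>i. Idm) v"
proof -
  have "(\<Sum>S\<in>Pow {..<n}. form d n (\<lambda>i. Kb \<theta> (i \<in> S)) v)
      = (\<Sum>xs\<in>idx d n. \<Sum>ys\<in>idx d n. cnj (v xs) * (\<Sum>S\<in>Pow {..<n}. \<Prod>i<n. Kb \<theta> (i \<in> S) (xs!i) (ys!i)) * v ys)"
    unfolding form_def sum_distrib_left sum_distrib_right
    by (subst sum.swap, rule sum.cong[OF refl], rule sum.swap)
  also have "\<dots> = form d n (\<lambda>i. Idm) v"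
    unfolding form_def by (intro sum.cong refl) (simp add: sum_Kb_prod prod_Idm)
  finally show ?thesis .
qed

lemma form_cong:
  assumes "\<And>i x y. i < n \<Longrightarrow> x < d \<Longrightarrow> y < d \<Longrightarrow> C i x y = C' i x y"
  shows "form d n C v = form d n C' v"
  unfolding form_def
  by (intro sum.cong refl arg_cong2[where f="(*)"] prod.cong) (auto simp: idx_nth_less assms)

lemma sw_Idm_gen: "b < d \<Longrightarrow> sw d K Idm a b = (\<Sum>x<d. cnj (K x a) * K x b)"
  unfolding sw_def Idm_def by (simp add: if0_simps sum.delta cong: if_cong)

lemma sw_Idm:
  assumes h: "(\<Sum>x<d. cnj (\<theta> x) * \<theta> x) = 1" and "a < d" "b < d"
  shows "sw d (Kb \<theta> bb) Idm a b = Kb \<theta> bb a b"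
proof -
  have qt: "(\<Sum>x<d. cnj (Qt \<theta> x a) * Qt \<theta> x b) = Qt \<theta> a b"
  proof -
    have "(\<Sum>x<d. cnj (Qt \<theta> x a) * Qt \<theta> x b) = (\<Sum>x<d. cnj (\<theta> x) * \<theta> x) * (\<theta> a * cnj (\<theta> b))"
      unfolding Qt_def sum_distrib_right by (intro sum.cong refl) (simp add: mult_ac)
    then show ?thesis using h by (simp add: Qt_def)
  qed
  show ?thesis
  proof (cases bb)
    case False
    then show ?thesis using qt assms by (simp add: Kb_def sw_Idm_gen)
  next
    case True
    have "(\<Sum>x<d. cnj (Qp \<theta> x a) * Qp \<theta> x b)
        = (\<Sum>x<d. cnj (Idm x a) * Idm x b) - (\<Sum>x<d. cnj (Idm x a) * Qt \<theta> x b)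
          - (\<Sum>x<d. cnj (Qt \<theta> x a) * Idm x b) + (\<Sum>x<d. cnj (Qt \<theta> x a) * Qt \<theta> x b)"
      unfolding Qp_def by (simp add: algebra_simps sum.distrib sum_subtractf)
    also have "\<dots> = Idm a b - Qt \<theta> a b - Qt \<theta> a b + Qt \<theta> a b"
      using assms qt by (simp add: Idm_def if0_simps sum.delta Qt_def mult.commute cong: if_cong)
    finally show ?thesis using True assms by (simp add: Kb_def sw_Idm_gen Qp_def)
  qed
qed

lemma sw_Qt: "sw d (Qt \<theta>) C a b = qf d C \<theta> * Qt \<theta> a b"
  unfolding sw_def qf_def Qt_def sum_distrib_right
  by (intro sum.cong refl) (simp add: mult_ac)

lemma sw_lin: "sw d K (\<lambda>x y. \<Sum>w\<in>W. f w * C w x y) a b = (\<Sum>w\<in>W. f w * sw d K (C w) a b)"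
  unfolding sw_def sum_distrib_left sum_distrib_right
  by (subst sum.swap, rule sum.cong[OF refl], subst sum.swap) (simp add: mult_ac)

lemma sw_kraus:
  assumes "\<And>x y. x < d \<Longrightarrow> y < d \<Longrightarrow> C x y = (\<Sum>k<d. cnj (B k x) * B k y)"
  shows "sw d K C a b = (\<Sum>k<d. cnj (\<Sum>x<d. B k x * K x a) * (\<Sum>y<d. B k y * K y b))"
proof -
  have "sw d K C a b = (\<Sum>x<d. \<Sum>y<d. \<Sum>k<d. cnj (K x a) * (cnj (B k x) * B k y) * K y b)"
    unfolding sw_def using assms by (simp add: sum_distrib_left sum_distrib_right)
  also have "\<dots> = (\<Sum>k<d. \<Sum>x<d. \<Sum>y<d. cnj (K x a) * (cnj (B k x) * B k y) * K y b)"
    by (subst sum.swap, rule sum.cong[OF refl], rule sum.swap)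
  also have "\<dots> = (\<Sum>k<d. cnj (\<Sum>x<d. B k x * K x a) * (\<Sum>y<d. B k y * K y b))"
    unfolding cnj_sum complex_cnj_mult sum_product by (simp add: mult_ac)
  finally show ?thesis .
qed

lemma idx_update: "ys \<in> idx d n \<Longrightarrow> y < d \<Longrightarrow> ys[j := y] \<in> idx d n"
  unfolding idx_def using set_update_subset_insert by fastforce

lemma sum_coord_zero:
  assumes j: "j < n" and g0: "(\<Sum>y<d. g y) = 0"
    and R: "\<And>ys y. ys \<in> idx d n \<Longrightarrow> y < d \<Longrightarrow> R (ys[j := y]) = R ys"
  shows "(\<Sum>ys\<in>idx d n. g (ys!j) * R ys) = (0::complex)"
proof (cases "d = 0")
  case True
  have "idx d n = {}" using True j by (auto simp: idx_def)
  then show ?thesis by simp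
next
  case False
  define C where "C = (\<Sum>ys\<in>{ys\<in>idx d n. ys!j = 0}. R ys)"
  have len: "ys \<in> idx d n \<Longrightarrow> length ys = n" for ys by (simp add: idx_def)
  have inner: "(\<Sum>ys\<in>{ys\<in>idx d n. ys!j = y}. R ys) = C" if y: "y < d" for y
    unfolding C_def
  proof (rule sum.reindex_bij_witness[where i="\<lambda>ys. ys[j := y]" and j="\<lambda>ys. ys[j := 0]"])
    fix ys assume a: "ys \<in> {ys\<in>idx d n. ys!j = y}"
    then show "(ys[j := 0])[j := y] = ys" "ys[j := 0] \<in> {ys\<in>idx d n. ys!j = 0}"
      using False j len by (auto simp: idx_update)
    show "R (ys[j := 0]) = R ys" using a False R by auto
  next
    fix ys assume a: "ys \<in> {ys\<in>idx d n. ys!j = 0}"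
    then have e: "ys[j := 0] = ys" by (metis (mono_tags) list_update_id mem_Collect_eq)
    show "(ys[j := y])[j := 0] = ys" "ys[j := y] \<in> {ys\<in>idx d n. ys!j = y}"
      using a e y j len by (auto simp: idx_update)
  qed
  have "(\<Sum>ys\<in>idx d n. g (ys!j) * R ys) = (\<Sum>y<d. \<Sum>ys\<in>{ys\<in>idx d n. ys!j = y}. g (ys!j) * R ys)"
    by (rule sum.group[symmetric]) (auto simp: finite_idx idx_nth_less j)
  also have "\<dots> = (\<Sum>y<d. g y * C)"
    by (intro sum.cong refl) (simp add: sum_distrib_left[symmetric] inner)
  also have "\<dots> = 0" using g0 by (simp add: sum_distrib_right[symmetric])
  finally show ?thesis .
qed

lemma Qp_theta_zero:
  assumes h: "(\<Sum>x<d. cnj (\<theta> x) * \<theta> x) = 1"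
  shows "(\<Sum>y<d. Qp \<theta> a y * \<theta> y) = (if a < d then 0 else 0 - \<theta> a)"
proof -
  have "(\<Sum>y<d. Qp \<theta> a y * \<theta> y) = (\<Sum>y<d. Idm a y * \<theta> y) - \<theta> a * (\<Sum>y<d. cnj (\<theta> y) * \<theta> y)"
    unfolding Qp_def Qt_def by (simp add: algebra_simps sum_subtractf sum_distrib_left)
  also have "\<dots> = (if a < d then \<theta> a else 0) - \<theta> a"
    using h by (simp add: Idm_def if0_simps sum.delta cong: if_cong)
  finally show ?thesis by simp
qed

lemma proj_V_zero:
  assumes h: "(\<Sum>x<d. cnj (\<theta> x) * \<theta> x) = 1"
    and pi: "\<pi> permutes {..<n}" and S: "S \<subseteq> {..<n}" and cS: "card S > r"
    and xs: "xs \<in> idx d n"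
  shows "opv d n (\<lambda>i. Kb \<theta> (i \<in> S)) (perm_vec \<pi> (power_tensor \<theta> (n - r) \<psi>)) xs = 0"
proof -
  define T where "T = \<pi> ` {..<n - r}"
  have injpi: "inj_on \<pi> {..<n}" using pi permutes_inj_on by blast
  have inA: "\<And>x. (\<pi> x \<in> {..<n}) = (x \<in> {..<n})" using permutes_in_image[OF pi] by blast
  have "inj_on \<pi> {..<n - r}" by (rule inj_on_subset[OF injpi]) auto
  note card_image[OF this]
  then have cT: "card T = n - r" unfolding T_def by (simp only: card_lessThan)
  have TS: "T \<subseteq> {..<n}" unfolding T_def
  proof (rule image_subsetI)
    fix x assume "x \<in> {..<n-r}"
    then have "x \<in> {..<n}" by simp
    then show "\<pi> x \<in> {..<n}" using inA by blast
  qed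
  have "S \<inter> T \<noteq> {}"
  proof
    assume e: "S \<inter> T = {}"
    have "card (S \<union> T) \<le> card {..<n}" using S TS by (intro card_mono) auto
    then have "card (S \<union> T) \<le> n" by simp
    moreover have "card (S \<union> T) = card S + card T" using e S TS
      by (intro card_Un_disjoint) (auto intro: finite_subset)
    ultimately show False using cS cT by linarith
  qed
  then obtain i0 where i0: "i0 < n - r" "\<pi> i0 \<in> S" unfolding T_def by auto
  define j where "j = \<pi> i0"
  have jn: "j < n" using i0 S j_def by auto
  have jS: "j \<in> S" using i0 j_def by simp
  have pij: "\<pi> i = j \<longleftrightarrow> i = i0" if "i < n" for i
  proof
    assume "\<pi> i = j"
    then have "\<pi> i = \<pi> i0" by (simp add: j_def)
    moreover have "i0 \<in> {..<n}" "i \<in> {..<n}" using i0 that by auto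
    ultimately show "i = i0" using injpi by (meson inj_onD)
  qed (simp add: j_def)
  define R where "R ys = (\<Prod>i\<in>{..<n}-{j}. Kb \<theta> (i \<in> S) (xs!i) (ys!i))
      * (\<Prod>i\<in>{..<n-r}-{i0}. \<theta> (ys ! \<pi> i)) * \<psi> (drop (n-r) (permute_list \<pi> ys))" for ys
  have split: "(\<Prod>i<n. Kb \<theta> (i \<in> S) (xs!i) (ys!i)) * perm_vec \<pi> (power_tensor \<theta> (n - r) \<psi>) ys
        = Qp \<theta> (xs!j) (ys!j) * \<theta> (ys!j) * R ys" if ys: "ys \<in> idx d n" for ys
  proof -
    have len: "length ys = n" using ys by (simp add: idx_def)
    have pl: "permute_list \<pi> ys ! i = ys ! \<pi> i" if "i < n" for i
      using permute_list_nth[of \<pi> ys i] pi len that by simp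
    have "perm_vec \<pi> (power_tensor \<theta> (n - r) \<psi>) ys
        = (\<Prod>i<n-r. \<theta> (ys ! \<pi> i)) * \<psi> (drop (n-r) (permute_list \<pi> ys))"
      unfolding perm_vec_def power_tensor_def using pl by (intro arg_cong2[where f="(*)"] prod.cong refl) auto
    also have "(\<Prod>i<n-r. \<theta> (ys ! \<pi> i)) = \<theta> (ys ! j) * (\<Prod>i\<in>{..<n-r}-{i0}. \<theta> (ys ! \<pi> i))"
      using i0 by (subst prod.remove[of "{..<n-r}" i0]) (auto simp: j_def)
    finally have u: "perm_vec \<pi> (power_tensor \<theta> (n - r) \<psi>) ys
        = \<theta> (ys ! j) * (\<Prod>i\<in>{..<n-r}-{i0}. \<theta> (ys ! \<pi> i)) * \<psi> (drop (n-r) (permute_list \<pi> ys))" .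
    have "(\<Prod>i<n. Kb \<theta> (i \<in> S) (xs!i) (ys!i)) = Kb \<theta> (j \<in> S) (xs!j) (ys!j) * (\<Prod>i\<in>{..<n}-{j}. Kb \<theta> (i \<in> S) (xs!i) (ys!i))"
      using jn by (subst prod.remove[of "{..<n}" j]) auto
    then show ?thesis using u jS unfolding R_def by (simp add: Kb_def)
  qed
  have Rinv: "R (ys[j := y]) = R ys" if ys: "ys \<in> idx d n" and y: "y < d" for ys y
  proof -
    have len: "length ys = n" using ys by (simp add: idx_def)
    have a: "(\<Prod>i\<in>{..<n}-{j}. Kb \<theta> (i \<in> S) (xs!i) (ys[j := y]!i)) = (\<Prod>i\<in>{..<n}-{j}. Kb \<theta> (i \<in> S) (xs!i) (ys!i))"
      by (intro prod.cong refl) auto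
    have b: "(\<Prod>i\<in>{..<n-r}-{i0}. \<theta> (ys[j := y] ! \<pi> i)) = (\<Prod>i\<in>{..<n-r}-{i0}. \<theta> (ys ! \<pi> i))"
    proof (intro prod.cong refl)
      fix i assume a: "i \<in> {..<n-r}-{i0}"
      then have "i < n" "i \<noteq> i0" by auto
      then have "\<pi> i \<noteq> j" using pij by blast
      then show "\<theta> (ys[j := y] ! \<pi> i) = \<theta> (ys ! \<pi> i)" by simp
    qed
    have c: "drop (n-r) (permute_list \<pi> (ys[j := y])) = drop (n-r) (permute_list \<pi> ys)"
    proof (rule nth_equalityI)
      show "length (drop (n-r) (permute_list \<pi> (ys[j := y]))) = length (drop (n-r) (permute_list \<pi> ys))" by simp
      fix k assume k: "k < length (drop (n-r) (permute_list \<pi> (ys[j := y])))"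
      then have k': "n - r + k < n" using len by simp
      have ne: "\<pi> (n - r + k) \<noteq> j" using pij[OF k'] i0 by auto
      have "drop (n-r) (permute_list \<pi> (ys[j := y])) ! k = permute_list \<pi> (ys[j := y]) ! (n - r + k)"
        using k by simp
      also have "\<dots> = ys[j := y] ! \<pi> (n - r + k)" using permute_list_nth[of \<pi> "ys[j := y]"] pi len k' by simp
      also have "\<dots> = ys ! \<pi> (n - r + k)" using ne by simp
      also have "\<dots> = permute_list \<pi> ys ! (n - r + k)" using permute_list_nth[of \<pi> ys] pi len k' by simp
      also have "\<dots> = drop (n-r) (permute_list \<pi> ys) ! k" using k' len by simp
      finally show "drop (n-r) (permute_list \<pi> (ys[j := y])) ! k = drop (n-r) (permute_list \<pi> ys) ! k" .
    qed
    show ?thesis unfolding R_def using a b c by simp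
  qed
  have g0: "(\<Sum>y<d. Qp \<theta> (xs!j) y * \<theta> y) = 0"
    using Qp_theta_zero[OF h, of "xs!j"] idx_nth_less[OF xs jn] by simp
  have "opv d n (\<lambda>i. Kb \<theta> (i \<in> S)) (perm_vec \<pi> (power_tensor \<theta> (n - r) \<psi>)) xs
      = (\<Sum>ys\<in>idx d n. (Qp \<theta> (xs!j) (ys!j) * \<theta> (ys!j)) * R ys)"
    unfolding opv_def using split by (intro sum.cong refl) auto
  also have "\<dots> = 0"
    by (rule sum_coord_zero[OF jn _ Rinv]) (use g0 in simp_all)
  finally show ?thesis .
qed

lemma proj_span_zero:
  assumes h: "(\<Sum>x<d. cnj (\<theta> x) * \<theta> x) = 1"
    and sp: "in_tspan d n (Vset d \<theta> n r) \<phi>"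
    and S: "S \<subseteq> {..<n}" and cS: "card S > r" and xs: "xs \<in> idx d n"
  shows "opv d n (\<lambda>i. Kb \<theta> (i \<in> S)) \<phi> xs = 0"
proof -
  obtain F c where F: "finite F" "F \<subseteq> Vset d \<theta> n r" and eq: "\<forall>ys\<in>idx d n. \<phi> ys = (\<Sum>u\<in>F. c u * u ys)"
    using sp unfolding in_tspan_def by blast
  have z: "opv d n (\<lambda>i. Kb \<theta> (i \<in> S)) u xs = 0" if "u \<in> F" for u
  proof -
    from that F(2) obtain \<pi> \<psi> where "u = perm_vec \<pi> (power_tensor \<theta> (n - r) \<psi>)" "\<pi> permutes {..<n}"
      unfolding Vset_def by blast
    then show ?thesis using proj_V_zero[OF h _ S cS xs] by simp
  qed
  have "opv d n (\<lambda>i. Kb \<theta> (i \<in> S)) \<phi> xs = (\<Sum>u\<in>F. c u * opv d n (\<lambda>i. Kb \<theta> (i \<in> S)) u xs)"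
    unfolding opv_def using eq
    by (simp add: sum_distrib_left sum_distrib_right mult_ac sum.swap[of _ F] cong: sum.cong)
  also have "\<dots> = 0" using z by simp
  finally show ?thesis .
qed

lemma decomp_span:
  assumes h: "(\<Sum>x<d. cnj (\<theta> x) * \<theta> x) = 1"
    and sp: "in_tspan d n (Vset d \<theta> n r) \<phi>" and xs: "xs \<in> idx d n"
  shows "\<phi> xs = (\<Sum>S\<in>{S\<in>Pow {..<n}. card S \<le> r}. opv d n (\<lambda>i. Kb \<theta> (i \<in> S)) \<phi> xs)"
proof -
  have "\<phi> xs = (\<Sum>S\<in>Pow {..<n}. opv d n (\<lambda>i. Kb \<theta> (i \<in> S)) \<phi> xs)"
    using sum_projections[OF xs] by simp
  also have "\<dots> = (\<Sum>S\<in>{S\<in>Pow {..<n}. card S \<le> r}. opv d n (\<lambda>i. Kb \<theta> (i \<in> S)) \<phi> xs)"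
    by (rule sum.mono_neutral_right) (auto intro: proj_span_zero[OF h sp _ _ xs])
  finally show ?thesis .
qed

lemma cmod_sum_sq:
  assumes "finite F"
  shows "(cmod (\<Sum>S\<in>F. z S))\<^sup>2 \<le> real (card F) * (\<Sum>S\<in>F. (cmod (z S))\<^sup>2)"
proof -
  have "(cmod (\<Sum>S\<in>F. z S))\<^sup>2 \<le> (\<Sum>S\<in>F. cmod (z S))\<^sup>2"
    by (intro power_mono norm_sum) simp
  also have "\<dots> \<le> (\<Sum>S\<in>F. (cmod (z S))\<^sup>2) * card F"
    by (rule sum_squared_le_sum_of_squares)
  finally show ?thesis by (simp add: mult.commute)
qed

lemma kvec_sum:
  assumes "\<And>ys. ys \<in> idx d n \<Longrightarrow> v ys = (\<Sum>S\<in>F. a S ys)"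
  shows "kvec d n E ks v = (\<Sum>S\<in>F. kvec d n E ks (a S))"
  unfolding kvec_def using assms
  by (simp add: sum_distrib_left sum.swap[of _ F] cong: sum.cong)

lemma born_kraus:
  assumes B: "\<And>w x y. w \<in> W \<Longrightarrow> x < d \<Longrightarrow> y < d \<Longrightarrow> M w x y = (\<Sum>k<d. cnj (B w k x) * B w k y)"
    and ws: "ws \<in> lists_of W n"
  shows "born_prob d n M ws v = (\<Sum>ks\<in>idx d n. (cmod (kvec d n (\<lambda>i. B (ws!i)) ks v))\<^sup>2)"
proof -
  have "form d n (\<lambda>i. M (ws!i)) v = of_real (\<Sum>ks\<in>idx d n. (cmod (kvec d n (\<lambda>i. B (ws!i)) ks v))\<^sup>2)"
    by (rule form_kraus) (use ws in \<open>auto simp: lists_of_def intro!: B\<close>)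
  then show ?thesis by (simp add: born_form)
qed

lemma born_decomp:
  assumes B: "\<And>w x y. w \<in> W \<Longrightarrow> x < d \<Longrightarrow> y < d \<Longrightarrow> M w x y = (\<Sum>k<d. cnj (B w k x) * B w k y)"
    and ws: "ws \<in> lists_of W n" and F: "finite F"
    and dec: "\<And>ys. ys \<in> idx d n \<Longrightarrow> v ys = (\<Sum>S\<in>F. a S ys)"
  shows "born_prob d n M ws v \<le> real (card F) * (\<Sum>S\<in>F. born_prob d n M ws (a S))"
proof -
  have "born_prob d n M ws v = (\<Sum>ks\<in>idx d n. (cmod (\<Sum>S\<in>F. kvec d n (\<lambda>i. B (ws!i)) ks (a S)))\<^sup>2)"
  proof -
    have "kvec d n (\<lambda>i. B (ws!i)) ks v = (\<Sum>S\<in>F. kvec d n (\<lambda>i. B (ws!i)) ks (a S))" for ks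
      by (rule kvec_sum) (rule dec)
    then show ?thesis using born_kraus[OF B ws, where v=v] by simp
  qed
  also have "\<dots> \<le> (\<Sum>ks\<in>idx d n. real (card F) * (\<Sum>S\<in>F. (cmod (kvec d n (\<lambda>i. B (ws!i)) ks (a S)))\<^sup>2))"
    by (intro sum_mono cmod_sum_sq F)
  also have "\<dots> = real (card F) * (\<Sum>S\<in>F. born_prob d n M ws (a S))"
  proof -
    have e: "born_prob d n M ws (a S) = (\<Sum>ks\<in>idx d n. (cmod (kvec d n (\<lambda>i. B (ws!i)) ks (a S)))\<^sup>2)" for S
      by (rule born_kraus[OF B ws])
    show ?thesis unfolding e sum_distrib_left by (rule sum.swap)
  qed
  finally show ?thesis .
qed

lemma sw_cong:
  assumes "\<And>x y. x < d \<Longrightarrow> y < d \<Longrightarrow> C x y = C' x y"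
  shows "sw d K C a b = sw d K C' a b"
  unfolding sw_def using assms by (intro sum.cong refl) auto

lemma qf_lin: "qf d (\<lambda>x y. \<Sum>w\<in>W. f w * C w x y) v = (\<Sum>w\<in>W. f w * qf d (C w) v)"
  unfolding qf_def sum_distrib_left sum_distrib_right
  by (subst sum.swap, rule sum.cong[OF refl], subst sum.swap) (simp add: mult_ac)

lemma psd_qf_real: "psd d C \<Longrightarrow> qf d C v = of_real (Re (qf d C v))"
  unfolding psd_def by (metis Reals_cases Re_complex_of_real)

lemma outcome_qf: "outcome_dist d M \<theta> w = Re (qf d (M w) \<theta>)"
  by (simp add: outcome_dist_def qf_def)

lemma qf_Idm: "qf d Idm v = (\<Sum>x<d. cnj (v x) * v x)"
  unfolding qf_def Idm_def by (simp add: if0_simps sum.delta cong: if_cong)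

lemma qf_cong_mat: "(\<And>x y. x < d \<Longrightarrow> y < d \<Longrightarrow> C x y = C' x y) \<Longrightarrow> qf d C v = qf d C' v"
  unfolding qf_def by (intro sum.cong refl) auto

lemma sum_outcome:
  assumes sumM: "\<And>i j. i < d \<Longrightarrow> j < d \<Longrightarrow> (\<Sum>w\<in>W. M w i j) = Idm i j"
    and h: "(\<Sum>x<d. cnj (\<theta> x) * \<theta> x) = 1"
  shows "(\<Sum>w\<in>W. outcome_dist d M \<theta> w) = 1"
proof -
  have "(\<Sum>w\<in>W. qf d (M w) \<theta>) = qf d (\<lambda>x y. \<Sum>w\<in>W. 1 * M w x y) \<theta>"
    using qf_lin[where f="\<lambda>_. 1" and W=W and C=M and v=\<theta> and d=d] by simp
  also have "\<dots> = qf d Idm \<theta>" by (rule qf_cong_mat) (simp add: sumM)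
  also have "\<dots> = 1" using h by (simp add: qf_Idm)
  finally show ?thesis unfolding outcome_qf by (metis Re_sum one_complex.sel(1))
qed

lemma count_ind:
  assumes "finite A"
  shows "(\<Sum>w\<in>A. count_list ws w) = (\<Sum>i<length ws. if ws!i \<in> A then 1 else 0)"
proof (induction ws)
  case Nil
  then show ?case by simp
next
  case (Cons a ws)
  have "(\<Sum>w\<in>A. count_list (a # ws) w) = (\<Sum>w\<in>A. (if a = w then 1 else 0) + count_list ws w)"
    by (intro sum.cong refl) simp
  also have "\<dots> = (if a \<in> A then 1 else 0) + (\<Sum>w\<in>A. count_list ws w)"
    using assms by (simp add: sum.distrib)
  also have "\<dots> = (\<Sum>i<length (a # ws). if (a # ws)!i \<in> A then 1 else 0)"
    using Cons by (simp del: sum.lessThan_Suc add: sum.lessThan_Suc_shift)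
  finally show ?case .
qed

lemma exp_count:
  assumes "finite A" and ws: "length ws = n"
  shows "exp (l * real (\<Sum>w\<in>A. count_list ws w)) = (\<Prod>i<n. if ws!i \<in> A then exp l else 1)"
proof -
  have "exp (l * real (\<Sum>w\<in>A. count_list ws w)) = exp (\<Sum>i<n. l * (if ws!i \<in> A then 1 else 0))"
    using count_ind[OF assms(1), of ws] ws by (auto simp: sum_distrib_left intro!: sum.cong)
  also have "\<dots> = (\<Prod>i<n. exp (l * (if ws!i \<in> A then 1 else 0)))" by (rule exp_sum) simp
  also have "\<dots> = (\<Prod>i<n. if ws!i \<in> A then exp l else 1)" by (intro prod.cong refl) simp
  finally show ?thesis .
qed

lemma prod_if_const:
  fixes n :: nat
  assumes "S \<subseteq> {..<n}"
  shows "(\<Prod>i<n. if i \<in> S then c else 1) = c ^ card S"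
proof -
  have "(\<Prod>i<n. if i \<in> S then c else 1) = (\<Prod>i\<in>{..<n} \<inter> {i. i \<in> S}. c) * (\<Prod>i\<in>{..<n} \<inter> - {i. i \<in> S}. 1)"
    by (rule prod.If_cases[OF finite_lessThan])
  also have "{..<n} \<inter> {i. i \<in> S} = S" using assms by auto
  finally show ?thesis by simp
qed

lemma prod_if_const2:
  fixes n :: nat
  assumes "S \<subseteq> {..<n}"
  shows "(\<Prod>i<n. if i \<in> S then 1 else c) = c ^ (n - card S)"
proof -
  have "(\<Prod>i<n. if i \<in> S then 1 else c) = (\<Prod>i\<in>{..<n} \<inter> {i. i \<in> S}. 1) * (\<Prod>i\<in>{..<n} \<inter> - {i. i \<in> S}. c)"
    by (rule prod.If_cases[OF finite_lessThan])
  also have "{..<n} \<inter> - {i. i \<in> S} = {..<n} - S" by auto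
  finally have e: "(\<Prod>i<n. if i \<in> S then 1 else c) = c ^ card ({..<n} - S)" by simp
  have "card ({..<n} - S) = n - card S" using assms by (simp add: card_Diff_subset finite_subset)
  then show ?thesis using e by simp
qed

lemma form_scale:
  "form d n (\<lambda>i x y. c i * C i x y) v = (\<Prod>i<n. c i) * form d n C v"
  unfolding form_def sum_distrib_left by (intro sum.cong refl) (simp add: prod.distrib mult_ac)

lemma form_K_norm2:
  assumes h: "(\<Sum>x<d. cnj (\<theta> x) * \<theta> x) = 1"
  shows "form d n (\<lambda>i. Kb \<theta> (i \<in> S)) v = of_real (norm2 d n (opv d n (\<lambda>i. Kb \<theta> (i \<in> S)) v))"
proof -
  have "of_real (norm2 d n (opv d n (\<lambda>i. Kb \<theta> (i \<in> S)) v)) = form d n (\<lambda>i. Idm) (opv d n (\<lambda>i. Kb \<theta> (i \<in> S)) v)"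
    by (simp add: form_Idm)
  also have "\<dots> = form d n (\<lambda>i. sw d (Kb \<theta> (i \<in> S)) Idm) v" by (rule form_opv)
  also have "\<dots> = form d n (\<lambda>i. Kb \<theta> (i \<in> S)) v"
    by (rule form_cong) (simp add: sw_Idm[OF h])
  finally show ?thesis by simp
qed

lemma form_sw_nonneg:
  assumes B: "\<And>w x y. w \<in> W \<Longrightarrow> x < d \<Longrightarrow> y < d \<Longrightarrow> M w x y = (\<Sum>k<d. cnj (B w k x) * B w k y)"
    and ws: "ws \<in> lists_of W n"
  shows "form d n (\<lambda>i. sw d (K i) (M (ws!i))) v = of_real (Re (form d n (\<lambda>i. sw d (K i) (M (ws!i))) v))"
    "Re (form d n (\<lambda>i. sw d (K i) (M (ws!i))) v) \<ge> 0"
proof -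
  have wsi: "ws ! i \<in> W" if "i < n" for i using ws that by (auto simp: lists_of_def)
  have "form d n (\<lambda>i. sw d (K i) (M (ws!i))) v
      = of_real (\<Sum>ks\<in>idx d n. (cmod (kvec d n (\<lambda>i k a. \<Sum>x<d. B (ws!i) k x * K i x a) ks v))\<^sup>2)"
    by (rule form_kraus, rule sw_kraus, rule B) (auto intro: wsi)
  then show "form d n (\<lambda>i. sw d (K i) (M (ws!i))) v = of_real (Re (form d n (\<lambda>i. sw d (K i) (M (ws!i))) v))"
    "Re (form d n (\<lambda>i. sw d (K i) (M (ws!i))) v) \<ge> 0"
    by (auto intro: sum_nonneg)
qed

lemma chernoff_S:
  fixes W :: "'w set" and M :: "'w \<Rightarrow> nat \<Rightarrow> nat \<Rightarrow> complex"
  assumes fW: "finite W"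
    and B: "\<And>w x y. w \<in> W \<Longrightarrow> x < d \<Longrightarrow> y < d \<Longrightarrow> M w x y = (\<Sum>k<d. cnj (B w k x) * B w k y)"
    and psdM: "\<And>w. w \<in> W \<Longrightarrow> psd d (M w)"
    and sumM: "\<And>i j. i < d \<Longrightarrow> j < d \<Longrightarrow> (\<Sum>w\<in>W. M w i j) = Idm i j"
    and h: "(\<Sum>x<d. cnj (\<theta> x) * \<theta> x) = 1"
    and S: "S \<subseteq> {..<n}" and A: "A \<subseteq> W" and l: "l \<ge> 0"
  shows "(\<Sum>ws\<in>lists_of W n. exp (l * real (\<Sum>w\<in>A. count_list ws w)) * born_prob d n M ws (opv d n (\<lambda>i. Kb \<theta> (i \<in> S)) v))
    \<le> exp l ^ card S * (1 + (exp l - 1) * (\<Sum>w\<in>A. outcome_dist d M \<theta> w)) ^ (n - card S)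
       * norm2 d n (opv d n (\<lambda>i. Kb \<theta> (i \<in> S)) v)"
proof -
  define K where "K i = Kb \<theta> (i \<in> S)" for i
  define z where "z w = (if w \<in> A then exp l else 1)" for w
  define z' where "z' i w = (if i \<in> S then 1 else z w)" for i w
  define fn where "fn ws = Re (form d n (\<lambda>i. sw d (K i) (M (ws!i))) v)" for ws
  define \<mu> where "\<mu> = 1 + (exp l - 1) * (\<Sum>w\<in>A. outcome_dist d M \<theta> w)"
  have fA: "finite A" using A fW finite_subset by blast
  have el: "exp l \<ge> 1" using l by simp
  have z1: "1 \<le> z w" "z w \<le> exp l" for w using el by (auto simp: z_def)
  have born: "born_prob d n M ws (opv d n (\<lambda>i. Kb \<theta> (i \<in> S)) v) = fn ws" for ws
    unfolding born_form fn_def K_def form_opv ..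
  have fnr: "form d n (\<lambda>i. sw d (K i) (M (ws!i))) v = of_real (fn ws)" "fn ws \<ge> 0"
    if "ws \<in> lists_of W n" for ws
    using form_sw_nonneg[OF B that, where K=K and v=v] by (simp_all add: fn_def)
  have zb: "exp (l * real (\<Sum>w\<in>A. count_list ws w)) \<le> exp l ^ card S * (\<Prod>i<n. z' i (ws!i))"
    if ws: "ws \<in> lists_of W n" for ws
  proof -
    have "exp (l * real (\<Sum>w\<in>A. count_list ws w)) = (\<Prod>i<n. z (ws!i))"
      using exp_count[OF fA, of ws n l] ws by (simp add: lists_of_def z_def)
    also have "\<dots> = (\<Prod>i<n. z' i (ws!i) * (if i \<in> S then z (ws!i) else 1))"
      by (intro prod.cong refl) (simp add: z'_def)
    also have "\<dots> = (\<Prod>i<n. z' i (ws!i)) * (\<Prod>i<n. (if i \<in> S then z (ws!i) else 1))"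
      by (rule prod.distrib)
    also have "\<dots> \<le> (\<Prod>i<n. z' i (ws!i)) * (\<Prod>i<n. (if i \<in> S then exp l else 1))"
      using z1 by (intro mult_left_mono prod_mono prod_nonneg) (auto simp: z'_def order_trans[OF zero_le_one])
    also have "\<dots> = exp l ^ card S * (\<Prod>i<n. z' i (ws!i))"
      using prod_if_const[OF S, of "exp l"] by (simp add: mult.commute)
    finally show ?thesis .
  qed
  have "(\<Sum>ws\<in>lists_of W n. exp (l * real (\<Sum>w\<in>A. count_list ws w)) * born_prob d n M ws (opv d n (\<lambda>i. Kb \<theta> (i \<in> S)) v))
      \<le> (\<Sum>ws\<in>lists_of W n. exp l ^ card S * (\<Prod>i<n. z' i (ws!i)) * fn ws)"
    unfolding born using zb fnr by (intro sum_mono mult_right_mono) auto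
  also have "\<dots> = exp l ^ card S * (\<Sum>ws\<in>lists_of W n. (\<Prod>i<n. z' i (ws!i)) * fn ws)"
    by (simp add: sum_distrib_left mult_ac)
  also have "(\<Sum>ws\<in>lists_of W n. (\<Prod>i<n. z' i (ws!i)) * fn ws)
      = Re (\<Sum>ws\<in>lists_of W n. (\<Prod>i<n. complex_of_real (z' i (ws!i))) * form d n (\<lambda>i. sw d (K i) (M (ws!i))) v)"
    unfolding Re_sum by (intro sum.cong refl) (simp add: fnr flip: of_real_prod of_real_mult)
  also have "(\<Sum>ws\<in>lists_of W n. (\<Prod>i<n. complex_of_real (z' i (ws!i))) * form d n (\<lambda>i. sw d (K i) (M (ws!i))) v)
      = form d n (\<lambda>i x y. \<Sum>w\<in>W. complex_of_real (z' i w) * sw d (K i) (M w) x y) v"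
    by (rule form_sum_lists[OF fW])
  also have "\<dots> = form d n (\<lambda>i x y. (if i \<in> S then 1 else complex_of_real \<mu>) * K i x y) v"
  proof (rule form_cong)
    fix i x y assume i: "i < n" and x: "x < d" and y: "y < d"
    have e1: "(\<Sum>w\<in>W. complex_of_real (z' i w) * sw d (K i) (M w) x y)
        = sw d (K i) (\<lambda>x y. \<Sum>w\<in>W. complex_of_real (z' i w) * M w x y) x y"
      by (rule sw_lin[symmetric])
    show "(\<Sum>w\<in>W. complex_of_real (z' i w) * sw d (K i) (M w) x y) = (if i \<in> S then 1 else complex_of_real \<mu>) * K i x y"
    proof (cases "i \<in> S")
      case True
      have "sw d (K i) (\<lambda>x y. \<Sum>w\<in>W. complex_of_real (z' i w) * M w x y) x y = sw d (K i) Idm x y"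
        by (rule sw_cong) (simp add: z'_def True sumM)
      also have "\<dots> = K i x y" unfolding K_def by (rule sw_Idm[OF h x y])
      finally show ?thesis using e1 True by simp
    next
      case False
      have "sw d (K i) (\<lambda>x y. \<Sum>w\<in>W. complex_of_real (z' i w) * M w x y) x y
          = qf d (\<lambda>x y. \<Sum>w\<in>W. complex_of_real (z w) * M w x y) \<theta> * Qt \<theta> x y"
        using False by (simp add: K_def Kb_def z'_def sw_Qt)
      also have "qf d (\<lambda>x y. \<Sum>w\<in>W. complex_of_real (z w) * M w x y) \<theta>
          = (\<Sum>w\<in>W. complex_of_real (z w) * qf d (M w) \<theta>)" by (rule qf_lin)
      also have "\<dots> = complex_of_real (\<Sum>w\<in>W. z w * outcome_dist d M \<theta> w)"
        unfolding of_real_sum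
        by (intro sum.cong refl) (simp add: outcome_qf psd_qf_real[OF psdM, symmetric])
      also have "(\<Sum>w\<in>W. z w * outcome_dist d M \<theta> w) = \<mu>"
      proof -
        have "(\<Sum>w\<in>W. z w * outcome_dist d M \<theta> w)
            = (\<Sum>w\<in>W. outcome_dist d M \<theta> w) + (\<Sum>w\<in>W. (if w \<in> A then (exp l - 1) * outcome_dist d M \<theta> w else 0))"
          unfolding sum.distrib[symmetric] by (intro sum.cong refl) (simp add: z_def algebra_simps)
        also have "(\<Sum>w\<in>W. (if w \<in> A then (exp l - 1) * outcome_dist d M \<theta> w else 0))
            = (exp l - 1) * (\<Sum>w\<in>A. outcome_dist d M \<theta> w)"
          using A fW by (simp add: sum.If_cases Int_absorb1 sum_distrib_left)
        finally show ?thesis using sum_outcome[OF sumM h] by (simp add: \<mu>_def)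
      qed
      finally show ?thesis using e1 False by (simp add: K_def Kb_def)
    qed
  qed
  also have "\<dots> = (\<Prod>i<n. if i \<in> S then 1 else complex_of_real \<mu>) * form d n K v"
    by (rule form_scale)
  also have "\<dots> = complex_of_real (\<mu> ^ (n - card S) * norm2 d n (opv d n (\<lambda>i. Kb \<theta> (i \<in> S)) v))"
    unfolding prod_if_const2[OF S] K_def form_K_norm2[OF h] by simp
  finally show ?thesis by (simp add: \<mu>_def mult_ac)
qed

lemma key_ineq:
  fixes x t :: real
  assumes x: "0 \<le> x" and t: "0 \<le> t" and xt: "2 * x \<le> t\<^sup>2"
  shows "t\<^sup>2 * (1 - x) \<le> 2 * (t - x)\<^sup>2"
proof -
  define \<sigma> where "\<sigma> = sqrt (2 * x)"
  have s0: "\<sigma> \<ge> 0" using x by (simp add: \<sigma>_def)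
  have s2: "\<sigma>\<^sup>2 = 2 * x" using x by (simp add: \<sigma>_def)
  have st: "\<sigma> \<le> t" unfolding \<sigma>_def using real_sqrt_le_mono[OF xt] t by simp
  define f where "f u = (1 + x) * u\<^sup>2 - 4 * x * u + 2 * x\<^sup>2" for u
  have a: "(1 + x) * \<sigma> \<ge> 2 * x"
  proof -
    have "((1 + x) * \<sigma>)\<^sup>2 - (2 * x)\<^sup>2 = (1 + x)\<^sup>2 * \<sigma>\<^sup>2 - (2 * x)\<^sup>2"
      by (simp only: power_mult_distrib)
    also have "\<dots> = (1 + x)\<^sup>2 * (2 * x) - (2 * x)\<^sup>2" by (simp only: s2)
    also have "\<dots> = 2 * x * (1 + x\<^sup>2)"
      by (simp add: power2_eq_square algebra_simps)
    finally have "((1 + x) * \<sigma>)\<^sup>2 - (2 * x)\<^sup>2 = 2 * x * (1 + x\<^sup>2)" .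
    moreover have "2 * x * (1 + x\<^sup>2) \<ge> 0" using x by simp
    ultimately have "(2 * x)\<^sup>2 \<le> ((1 + x) * \<sigma>)\<^sup>2" by linarith
    then show ?thesis by (rule power2_le_imp_le) (use s0 x in auto)
  qed
  have b: "1 + 2 * x \<ge> 2 * \<sigma>"
  proof -
    have "(1 + 2 * x)\<^sup>2 - (2 * \<sigma>)\<^sup>2 = (1 + 2 * x)\<^sup>2 - 4 * \<sigma>\<^sup>2"
      by (simp add: power_mult_distrib)
    also have "\<dots> = (1 + 2 * x)\<^sup>2 - 4 * (2 * x)" by (simp only: s2)
    also have "\<dots> = (1 - 2 * x)\<^sup>2" by (simp add: power2_eq_square algebra_simps)
    finally have "(1 + 2 * x)\<^sup>2 - (2 * \<sigma>)\<^sup>2 = (1 - 2 * x)\<^sup>2" .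
    then have "(2 * \<sigma>)\<^sup>2 \<le> (1 + 2 * x)\<^sup>2" by (metis diff_ge_0_iff_ge zero_le_power2)
    then show ?thesis by (rule power2_le_imp_le) (use x in auto)
  qed
  have "f t - f \<sigma> = (t - \<sigma>) * ((1 + x) * (t + \<sigma>) - 4 * x)"
    unfolding f_def by (simp add: power2_eq_square algebra_simps)
  moreover have "(1 + x) * (t + \<sigma>) - 4 * x \<ge> 0"
  proof -
    have "(1 + x) * (t + \<sigma>) \<ge> (1 + x) * (2 * \<sigma>)" using st x by (intro mult_left_mono) auto
    then show ?thesis using a by linarith
  qed
  ultimately have "f t \<ge> f \<sigma>" using st by (metis diff_ge_0_iff_ge mult_nonneg_nonneg)
  moreover have "f \<sigma> = 2 * x * (1 + 2 * x - 2 * \<sigma>)"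
  proof -
    have "f \<sigma> = (1 + x) * (2 * x) - 4 * x * \<sigma> + 2 * x\<^sup>2" unfolding f_def s2 ..
    also have "\<dots> = 2 * x * (1 + 2 * x - 2 * \<sigma>)" by (simp add: power2_eq_square algebra_simps)
    finally show ?thesis .
  qed
  moreover have "2 * x * (1 + 2 * x - 2 * \<sigma>) \<ge> 0" using b x by simp
  ultimately have "f t \<ge> 0" by linarith
  then show ?thesis unfolding f_def by (simp add: power2_eq_square algebra_simps)
qed

lemma chernoff_exp:
  fixes n s :: nat and t pA :: real
  assumes sn: "2 * s \<le> n" and n: "n \<ge> 1" and t: "t > 0" and st: "2 * real s \<le> real n * t\<^sup>2" and p: "pA \<ge> 0"
  defines "l \<equiv> 4 * (real n * t - real s) / (real n - real s)"
  shows "l \<ge> 0"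
    and "exp (- l * (real n * (pA + t))) * exp l ^ s * (1 + (exp l - 1) * pA) ^ (n - s) \<le> exp (- real n * t\<^sup>2)"
proof -
  define x where "x = real s / real n"
  have n0: "real n > 0" using n by simp
  have x0: "x \<ge> 0" by (simp add: x_def)
  have xh: "x \<le> 1/2" using sn n0 by (simp add: x_def field_simps)
  have xt: "2 * x \<le> t\<^sup>2" using st n0 by (simp add: x_def field_simps)
  have "x\<^sup>2 \<le> t\<^sup>2"
  proof -
    have "x * x \<le> x * 2" using x0 xh by (intro mult_left_mono) auto
    then have "x\<^sup>2 \<le> 2 * x" by (simp add: power2_eq_square mult.commute)
    then show ?thesis using xt by linarith
  qed
  then have xle: "x \<le> t" using t by (meson abs_le_square_iff abs_of_pos less_le_not_le linorder_le_less_linear order.trans power2_le_imp_le)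
  have snt: "real s \<le> real n * t" using xle n0 by (simp add: x_def field_simps)
  have m0: "real n - real s > 0" using sn n by linarith
  show l0: "l \<ge> 0" unfolding l_def using snt m0 by simp
  define m where "m = real n - real s"
  have mnat: "real (n - s) = m" using sn by (simp add: m_def)
  define \<mu> where "\<mu> = 1 + (exp l - 1) * pA"
  have mu0: "\<mu> > 0" unfolding \<mu>_def using p l0 by (simp add: add_pos_nonneg)
  have lnmu: "ln \<mu> \<le> l * pA + l\<^sup>2 / 8"
    using Hoeffdings_lemma_aux[OF l0 p] by (simp add: \<mu>_def mult.commute)
  have "\<mu> ^ (n - s) = exp (m * ln \<mu>)"
    using mu0 mnat by (metis exp_ln exp_of_nat_mult)
  also have "\<dots> \<le> exp (m * (l * pA + l\<^sup>2 / 8))"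
    using lnmu m0 by (simp add: m_def)
  finally have mu: "\<mu> ^ (n - s) \<le> exp (m * (l * pA + l\<^sup>2 / 8))" .
  have "exp (- l * (real n * (pA + t))) * exp l ^ s * \<mu> ^ (n - s)
      \<le> exp (- l * (real n * (pA + t))) * exp l ^ s * exp (m * (l * pA + l\<^sup>2 / 8))"
    using mu by (intro mult_left_mono) auto
  also have "\<dots> = exp (- l * (real n * t - real s) - l * real s * pA + m * l\<^sup>2 / 8)"
    by (simp add: exp_of_nat_mult[symmetric] exp_add[symmetric] m_def algebra_simps)
  also have "\<dots> \<le> exp (- l * (real n * t - real s) + m * l\<^sup>2 / 8)"
    using l0 p by (simp add: mult_nonneg_nonneg)
  also have "- l * (real n * t - real s) + m * l\<^sup>2 / 8 = - 2 * (real n * t - real s)\<^sup>2 / m"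
  proof -
    define D where "D = real n * t - real s"
    have lm: "l * m = 4 * D" unfolding l_def m_def D_def using m0 by simp
    have "- l * D + m * l\<^sup>2 / 8 = - l * D + (l * m) * l / 8" by (simp add: power2_eq_square mult_ac)
    also have "\<dots> = - l * D / 2" unfolding lm by simp
    also have "\<dots> = - 2 * D\<^sup>2 / m" unfolding l_def D_def[symmetric] m_def[symmetric] using m0 by (simp add: power2_eq_square field_simps)
    finally show ?thesis by (simp add: D_def)
  qed
  also have "- 2 * (real n * t - real s)\<^sup>2 / m \<le> - real n * t\<^sup>2"
  proof -
    have "t\<^sup>2 * (1 - x) \<le> 2 * (t - x)\<^sup>2" by (rule key_ineq[OF x0 _ xt]) (use t in simp)
    then have "(real n)\<^sup>2 * (t\<^sup>2 * (1 - x)) \<le> (real n)\<^sup>2 * (2 * (t - x)\<^sup>2)" by (simp add: mult_left_mono)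
    moreover have "(real n)\<^sup>2 * (t\<^sup>2 * (1 - x)) = real n * t\<^sup>2 * m" using n0 by (simp add: x_def m_def field_simps power2_eq_square)
    moreover have "(real n)\<^sup>2 * (2 * (t - x)\<^sup>2) = 2 * (real n * t - real s)\<^sup>2" using n0 by (simp add: x_def field_simps power2_eq_square)
    ultimately have "real n * t\<^sup>2 * m \<le> 2 * (real n * t - real s)\<^sup>2" by simp
    then show ?thesis using m0 by (simp add: field_simps m_def)
  qed
  finally show "exp (- l * (real n * (pA + t))) * exp l ^ s * (1 + (exp l - 1) * pA) ^ (n - s) \<le> exp (- real n * t\<^sup>2)"
    by (simp add: \<mu>_def)
qed

lemma bad_event:
  fixes W :: "'w set" and P :: "'w \<Rightarrow> real"
  assumes fW: "finite W" and Pnn: "\<And>w. w \<in> W \<Longrightarrow> P w \<ge> 0" and sumP: "(\<Sum>w\<in>W. P w) = 1"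
    and n: "n \<ge> 1" and ws: "ws \<in> lists_of W n" and bad: "l1_dist W P (rel_freq ws) > \<delta>"
    and dpos: "\<delta> > 0"
  shows "\<exists>A. A \<subseteq> W \<and> A \<noteq> {} \<and> card A \<le> n \<and>
           real (\<Sum>w\<in>A. count_list ws w) \<ge> real n * ((\<Sum>w\<in>A. P w) + \<delta> / 2)"
proof -
  define f where "f = rel_freq ws"
  have len: "length ws = n" and sws: "set ws \<subseteq> W" using ws by (auto simp: lists_of_def)
  have n0: "real n > 0" using n by simp
  have fdef: "f w = real (count_list ws w) / real n" for w by (simp add: f_def rel_freq_def len)
  have sumf: "(\<Sum>w\<in>W. f w) = 1"
  proof -
    have "(\<Sum>w\<in>W. f w) = real (\<Sum>w\<in>W. count_list ws w) / real n"
      by (simp add: fdef sum_divide_distrib)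
    also have "(\<Sum>w\<in>W. count_list ws w) = n" using sum_count_set[OF sws fW] len by simp
    finally show ?thesis using n0 by simp
  qed
  define A where "A = {w\<in>W. f w > P w}"
  have AW: "A \<subseteq> W" by (auto simp: A_def)
  have fA: "finite A" using AW fW finite_subset by blast
  have split1: "(\<Sum>w\<in>W. \<bar>P w - f w\<bar>) = (\<Sum>w\<in>A. f w - P w) + (\<Sum>w\<in>W - A. P w - f w)"
  proof -
    have "(\<Sum>w\<in>W. \<bar>P w - f w\<bar>) = (\<Sum>w\<in>A. \<bar>P w - f w\<bar>) + (\<Sum>w\<in>W - A. \<bar>P w - f w\<bar>)"
      using AW fW by (metis add.commute sum.subset_diff)
    also have "(\<Sum>w\<in>A. \<bar>P w - f w\<bar>) = (\<Sum>w\<in>A. f w - P w)" by (intro sum.cong refl) (auto simp: A_def)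
    also have "(\<Sum>w\<in>W - A. \<bar>P w - f w\<bar>) = (\<Sum>w\<in>W - A. P w - f w)" by (intro sum.cong refl) (auto simp: A_def)
    finally show ?thesis .
  qed
  have split2: "(\<Sum>w\<in>W. f w - P w) = (\<Sum>w\<in>A. f w - P w) + (\<Sum>w\<in>W - A. f w - P w)"
    using AW fW by (metis add.commute sum.subset_diff)
  have zero: "(\<Sum>w\<in>W. f w - P w) = 0" using sumf sumP by (simp add: sum_subtractf)
  have "(\<Sum>w\<in>W - A. P w - f w) = - (\<Sum>w\<in>W - A. f w - P w)" by (simp add: sum_negf[symmetric])
  then have l1: "l1_dist W P f = 2 * (\<Sum>w\<in>A. f w - P w)"
    unfolding l1_dist_def using split1 split2 zero by linarith
  have gt: "(\<Sum>w\<in>A. f w - P w) > \<delta> / 2" using bad l1 by (simp add: f_def)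
  have Ane: "A \<noteq> {}"
  proof
    assume "A = {}"
    then have "l1_dist W P f = 0" using l1 by simp
    moreover have "l1_dist W P f \<ge> 0" unfolding l1_dist_def by (simp add: sum_nonneg)
    ultimately show False using gt \<open>A = {}\<close> bad dpos by (simp add: f_def)
  qed
  have "A \<subseteq> set ws"
  proof
    fix w assume w: "w \<in> A"
    then have "f w > 0" using Pnn by (auto simp: A_def intro: le_less_trans)
    then have "count_list ws w \<noteq> 0" unfolding fdef by (metis div_0 of_nat_0 less_irrefl)
    then show "w \<in> set ws" using count_notin by fastforce
  qed
  then have cA: "card A \<le> n" using card_mono[of "set ws" A] card_length[of ws] len by simp
  have "(\<Sum>w\<in>A. f w - P w) = real (\<Sum>w\<in>A. count_list ws w) / real n - (\<Sum>w\<in>A. P w)"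
    by (simp add: sum_subtractf fdef sum_divide_distrib)
  then have "real (\<Sum>w\<in>A. count_list ws w) / real n > (\<Sum>w\<in>A. P w) + \<delta> / 2" using gt by linarith
  then have "real (\<Sum>w\<in>A. count_list ws w) > real n * ((\<Sum>w\<in>A. P w) + \<delta> / 2)"
    using n0 by (simp add: field_simps)
  then show ?thesis using AW Ane cA by (intro exI[of _ A]) auto
qed

lemma bad_S:
  fixes W :: "'w set" and M :: "'w \<Rightarrow> nat \<Rightarrow> nat \<Rightarrow> complex"
  assumes fW: "finite W"
    and B: "\<And>w x y. w \<in> W \<Longrightarrow> x < d \<Longrightarrow> y < d \<Longrightarrow> M w x y = (\<Sum>k<d. cnj (B w k x) * B w k y)"
    and psdM: "\<And>w. w \<in> W \<Longrightarrow> psd d (M w)"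
    and sumM: "\<And>i j. i < d \<Longrightarrow> j < d \<Longrightarrow> (\<Sum>w\<in>W. M w i j) = Idm i j"
    and h: "(\<Sum>x<d. cnj (\<theta> x) * \<theta> x) = 1"
    and S: "S \<subseteq> {..<n}" and n: "n \<ge> 1" and dpos: "\<delta> > 0"
    and sn: "2 * card S \<le> n" and st: "2 * real (card S) \<le> real n * (\<delta> / 2)\<^sup>2"
  shows "(\<Sum>ws\<in>{ws. length ws = n \<and> set ws \<subseteq> W \<and> l1_dist W (outcome_dist d M \<theta>) (rel_freq ws) > \<delta>}.
            born_prob d n M ws (opv d n (\<lambda>i. Kb \<theta> (i \<in> S)) v))
         \<le> real (card {A. A \<subseteq> W \<and> A \<noteq> {} \<and> card A \<le> n}) * exp (- real n * (\<delta> / 2)\<^sup>2)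
            * norm2 d n (opv d n (\<lambda>i. Kb \<theta> (i \<in> S)) v)"
proof -
  define a where "a = opv d n (\<lambda>i. Kb \<theta> (i \<in> S)) v"
  define P where "P = outcome_dist d M \<theta>"
  define Bad where "Bad = {ws. length ws = n \<and> set ws \<subseteq> W \<and> l1_dist W P (rel_freq ws) > \<delta>}"
  define AA where "AA = {A. A \<subseteq> W \<and> A \<noteq> {} \<and> card A \<le> n}"
  define t where "t = \<delta> / 2"
  define s where "s = card S"
  define l where "l = 4 * (real n * t - real s) / (real n - real s)"
  define T where "T A = real n * ((\<Sum>w\<in>A. P w) + t)" for A
  define cnt where "cnt A ws = real (\<Sum>w\<in>A. count_list ws w)" for A and ws :: "'w list"
  have t0: "t > 0" using dpos by (simp add: t_def)
  have Pnn: "P w \<ge> 0" if "w \<in> W" for w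
    using psd_qf_real[OF psdM[OF that]] psdM[OF that] unfolding P_def outcome_qf psd_def by blast
  have sumP: "(\<Sum>w\<in>W. P w) = 1" unfolding P_def by (rule sum_outcome[OF sumM h])
  have fAA: "finite AA"
  proof (rule finite_subset)
    show "AA \<subseteq> Pow W" by (auto simp: AA_def)
  qed (use fW in simp)
  have BadL: "Bad \<subseteq> lists_of W n" by (auto simp: Bad_def lists_of_def)
  have fL: "finite (lists_of W n)" using fW by (rule finite_lists_of)
  have bnn: "born_prob d n M ws a \<ge> 0" if "ws \<in> lists_of W n" for ws
    using born_kraus[OF B that, where v=a] by (simp add: sum_nonneg)
  have l0: "l \<ge> 0" and ex: "exp (- l * T A) * exp l ^ s * (1 + (exp l - 1) * (\<Sum>w\<in>A. P w)) ^ (n - s) \<le> exp (- real n * t\<^sup>2)"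
    if "A \<subseteq> W" for A
  proof -
    have pA: "(\<Sum>w\<in>A. P w) \<ge> 0" using that Pnn by (auto intro: sum_nonneg)
    show "l \<ge> 0" using chernoff_exp(1)[OF _ n t0 _ pA] sn st by (simp add: l_def s_def t_def)
    show "exp (- l * T A) * exp l ^ s * (1 + (exp l - 1) * (\<Sum>w\<in>A. P w)) ^ (n - s) \<le> exp (- real n * t\<^sup>2)"
      using chernoff_exp(2)[OF _ n t0 _ pA] sn st by (simp add: l_def s_def t_def T_def)
  qed
  have step1: "born_prob d n M ws a \<le> (\<Sum>A\<in>AA. if cnt A ws \<ge> T A then born_prob d n M ws a else 0)"
    if ws: "ws \<in> Bad" for ws
  proof -
    have wsL: "ws \<in> lists_of W n" using ws BadL by blast
    obtain A where A: "A \<subseteq> W" "A \<noteq> {}" "card A \<le> n" "cnt A ws \<ge> T A"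
      using bad_event[OF fW Pnn sumP n wsL _ dpos] ws unfolding Bad_def cnt_def T_def t_def P_def by blast
    then have AAA: "A \<in> AA" by (simp add: AA_def)
    have "born_prob d n M ws a = (if cnt A ws \<ge> T A then born_prob d n M ws a else 0)" using A by simp
    also have "\<dots> \<le> (\<Sum>A\<in>AA. if cnt A ws \<ge> T A then born_prob d n M ws a else 0)"
      by (rule member_le_sum[OF AAA _ fAA]) (use bnn[OF wsL] in auto)
    finally show ?thesis .
  qed
  have "(\<Sum>ws\<in>Bad. born_prob d n M ws a) \<le> (\<Sum>ws\<in>Bad. \<Sum>A\<in>AA. if cnt A ws \<ge> T A then born_prob d n M ws a else 0)"
    by (rule sum_mono) (rule step1)
  also have "\<dots> = (\<Sum>A\<in>AA. \<Sum>ws\<in>Bad. if cnt A ws \<ge> T A then born_prob d n M ws a else 0)"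
    by (rule sum.swap)
  also have "\<dots> \<le> (\<Sum>A\<in>AA. \<Sum>ws\<in>lists_of W n. if cnt A ws \<ge> T A then born_prob d n M ws a else 0)"
    by (intro sum_mono sum_mono2 fL BadL) (auto simp: bnn)
  also have "\<dots> \<le> (\<Sum>A\<in>AA. \<Sum>ws\<in>lists_of W n. exp (- l * T A) * (exp (l * cnt A ws) * born_prob d n M ws a))"
  proof (intro sum_mono)
    fix A ws assume A: "A \<in> AA" and ws: "ws \<in> lists_of W n"
    have lA: "l \<ge> 0" using l0 A by (auto simp: AA_def)
    have e: "exp (- l * T A) * (exp (l * cnt A ws) * born_prob d n M ws a) = exp (l * (cnt A ws - T A)) * born_prob d n M ws a"
      by (simp add: algebra_simps exp_add[symmetric] exp_diff)
    show "(if cnt A ws \<ge> T A then born_prob d n M ws a else 0) \<le> exp (- l * T A) * (exp (l * cnt A ws) * born_prob d n M ws a)"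
    proof (cases "cnt A ws \<ge> T A")
      case True
      then have "exp (l * (cnt A ws - T A)) \<ge> 1" using lA by simp
      then have "born_prob d n M ws a \<le> exp (l * (cnt A ws - T A)) * born_prob d n M ws a"
        using bnn[OF ws] by (metis mult_le_cancel_right1 linorder_not_le order_less_le_trans mult_1)
      moreover have "(if cnt A ws \<ge> T A then born_prob d n M ws a else 0) = born_prob d n M ws a" using True by simp
      ultimately show ?thesis unfolding e by linarith
    next
      case False
      then show ?thesis using bnn[OF ws] by simp
    qed
  qed
  also have "\<dots> = (\<Sum>A\<in>AA. exp (- l * T A) * (\<Sum>ws\<in>lists_of W n. exp (l * cnt A ws) * born_prob d n M ws a))"
    by (simp add: sum_distrib_left)
  also have "\<dots> \<le> (\<Sum>A\<in>AA. exp (- l * T A) * (exp l ^ s * (1 + (exp l - 1) * (\<Sum>w\<in>A. P w)) ^ (n - s) * norm2 d n a))"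
  proof (intro sum_mono mult_left_mono)
    fix A assume A: "A \<in> AA"
    have lA: "l \<ge> 0" using l0 A by (auto simp: AA_def)
    show "(\<Sum>ws\<in>lists_of W n. exp (l * cnt A ws) * born_prob d n M ws a)
        \<le> exp l ^ s * (1 + (exp l - 1) * (\<Sum>w\<in>A. P w)) ^ (n - s) * norm2 d n a"
      using chernoff_S[OF fW B psdM sumM h S _ lA, of A v] A
      unfolding a_def cnt_def s_def P_def AA_def by simp
  qed simp
  also have "\<dots> \<le> (\<Sum>A\<in>AA. exp (- real n * t\<^sup>2) * norm2 d n a)"
  proof (intro sum_mono)
    fix A assume A: "A \<in> AA"
    have nn: "norm2 d n a \<ge> 0" unfolding norm2_def by (simp add: sum_nonneg)
    have "exp (- l * T A) * (exp l ^ s * (1 + (exp l - 1) * (\<Sum>w\<in>A. P w)) ^ (n - s) * norm2 d n a)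
        = (exp (- l * T A) * exp l ^ s * (1 + (exp l - 1) * (\<Sum>w\<in>A. P w)) ^ (n - s)) * norm2 d n a"
      by (simp add: mult_ac)
    also have "\<dots> \<le> exp (- real n * t\<^sup>2) * norm2 d n a"
      using ex[of A] A nn by (intro mult_right_mono) (auto simp: AA_def)
    finally show "exp (- l * T A) * (exp l ^ s * (1 + (exp l - 1) * (\<Sum>w\<in>A. P w)) ^ (n - s) * norm2 d n a)
        \<le> exp (- real n * t\<^sup>2) * norm2 d n a" .
  qed
  also have "\<dots> = real (card AA) * exp (- real n * t\<^sup>2) * norm2 d n a" by simp
  finally show ?thesis unfolding a_def Bad_def AA_def t_def P_def .
qed

lemma entropy_aux_deriv:
  assumes "0 < x" "x < 1"
  shows "((\<lambda>x. - ln x - (1 / x - 1) * ln (1 - x)) has_real_derivative (ln (1 - x) / x\<^sup>2)) (at x)"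
proof -
  have "((\<lambda>x. - ln x - (1 / x - 1) * ln (1 - x)) has_real_derivative
          (- (1 / x) - ((- (1 / x\<^sup>2)) * ln (1 - x) + (1 / x - 1) * (- 1 / (1 - x))))) (at x)"
    using assms by (auto intro!: derivative_eq_intros simp: power2_eq_square)
  moreover have "- (1 / x) - ((- (1 / x\<^sup>2)) * ln (1 - x) + (1 / x - 1) * (- 1 / (1 - x))) = ln (1 - x) / x\<^sup>2"
  proof -
    have "(1 / x - 1) * (- 1 / (1 - x)) = - 1 / x" using assms by (simp add: field_simps)
    then show ?thesis by (simp add: power2_eq_square)
  qed
  ultimately show ?thesis by simp
qed

lemma entropy_ge:
  assumes "0 \<le> x" "x \<le> 1/2"
  shows "bin_entropy x \<ge> 2 * x"
proof (cases "x = 0")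
  case True
  then show ?thesis by (simp add: bin_entropy_def)
next
  case False
  then have x0: "x > 0" using assms by simp
  define g where "g y = - ln y - (1 / y - 1) * ln (1 - y)" for y :: real
  have "g (1/2) \<le> g x"
  proof (rule DERIV_nonpos_imp_nonincreasing[OF assms(2)])
    fix y assume "x \<le> y" "y \<le> 1/2"
    then have y: "0 < y" "y < 1" using x0 by auto
    show "\<exists>D. (g has_real_derivative D) (at y) \<and> D \<le> 0"
      using entropy_aux_deriv[OF y] y unfolding g_def
      by (intro exI[of _ "ln (1 - y) / y\<^sup>2"]) (auto intro!: divide_nonpos_nonneg)
  qed
  moreover have "g (1/2) = 2 * ln 2" by (simp add: g_def ln_div)
  ultimately have gx: "g x \<ge> 2 * ln 2" by simp
  have "bin_entropy x = (- x * ln x - (1 - x) * ln (1 - x)) / ln 2"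
    using x0 assms by (simp add: bin_entropy_def log_def diff_divide_distrib add_divide_distrib)
  also have "- x * ln x - (1 - x) * ln (1 - x) = x * g x"
    using x0 by (simp add: g_def field_simps)
  finally have "bin_entropy x = x * g x / ln 2" .
  moreover have "x * g x \<ge> x * (2 * ln 2)" using gx x0 by (intro mult_left_mono) auto
  ultimately have "bin_entropy x * ln 2 \<ge> (2 * x) * ln 2" by simp
  then show ?thesis by (simp add: mult_le_cancel_right_pos)
qed

lemma nat_le_three_halves_pow: "real k \<le> (3/2) ^ k"
proof (induction k)
  case 0
  then show ?case by simp
next
  case (Suc k)
  show ?case
  proof (cases "k \<le> 1")
    case True
    then consider "k = 0" | "k = 1" by linarith
    then show ?thesis by cases (simp_all add: power2_eq_square)
  next
    case False
    then have "real (Suc k) \<le> 3/2 * real k" by simp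
    also have "\<dots> \<le> 3/2 * (3/2) ^ k" using Suc.IH by simp
    finally show ?thesis by simp
  qed
qed

lemma card_AA:
  fixes W :: "'w set"
  assumes fW: "finite W" and n: "n \<ge> 1"
  shows "real (card {A. A \<subseteq> W \<and> A \<noteq> {} \<and> card A \<le> n}) \<le> (real n / 2 + 1) ^ card W"
proof (cases "n \<ge> 2")
  case True
  have "card {A. A \<subseteq> W \<and> A \<noteq> {} \<and> card A \<le> n} \<le> card (Pow W)"
    by (rule card_mono) (use fW in auto)
  then have "real (card {A. A \<subseteq> W \<and> A \<noteq> {} \<and> card A \<le> n}) \<le> 2 ^ card W"
    using fW by (simp add: card_Pow)
  also have "(2::real) ^ card W \<le> (real n / 2 + 1) ^ card W"
    using True by (intro power_mono) auto
  finally show ?thesis .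
next
  case False
  then have n1: "n = 1" using n by simp
  have sub: "{A. A \<subseteq> W \<and> A \<noteq> {} \<and> card A \<le> n} \<subseteq> (\<lambda>w. {w}) ` W"
  proof
    fix A assume A: "A \<in> {A. A \<subseteq> W \<and> A \<noteq> {} \<and> card A \<le> n}"
    then have "finite A" using fW finite_subset by auto
    then have "card A > 0" using A by (auto simp: card_gt_0_iff)
    then have "card A = 1" using A n1 by simp
    then obtain w where "A = {w}" by (auto simp: card_Suc_eq)
    then show "A \<in> (\<lambda>w. {w}) ` W" using A by auto
  qed
  have "card {A. A \<subseteq> W \<and> A \<noteq> {} \<and> card A \<le> n} \<le> card ((\<lambda>w. {w}) ` W)"
    by (rule card_mono[OF _ sub]) (use fW in simp)
  also have "\<dots> \<le> card W" by (rule card_image_le[OF fW])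
  finally have "real (card {A. A \<subseteq> W \<and> A \<noteq> {} \<and> card A \<le> n}) \<le> real (card W)" by simp
  also have "\<dots> \<le> (3/2) ^ card W" by (rule nat_le_three_halves_pow)
  also have "\<dots> = (real n / 2 + 1) ^ card W" using n1 by simp
  finally show ?thesis .
qed

lemma sum_binom_subsets:
  fixes \<rho> :: real
  shows "(\<Sum>S\<in>Pow {..<n}. \<rho> ^ card S * (1 - \<rho>) ^ (n - card S)) = 1"
proof -
  have "(1::real) = (\<Prod>i<n. \<rho> + (1 - \<rho>))" by simp
  also have "\<dots> = (\<Sum>X\<in>Pow {..<n}. (\<Prod>i\<in>X. \<rho>) * (\<Prod>i\<in>{..<n} - X. 1 - \<rho>))"
    by (rule prod_add) simp
  also have "\<dots> = (\<Sum>S\<in>Pow {..<n}. \<rho> ^ card S * (1 - \<rho>) ^ (n - card S))"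
  proof (intro sum.cong refl)
    fix X assume "X \<in> Pow {..<n}"
    then have "card ({..<n} - X) = n - card X" by (simp add: card_Diff_subset finite_subset)
    then show "(\<Prod>i\<in>X. \<rho>) * (\<Prod>i\<in>{..<n} - X. 1 - \<rho>) = \<rho> ^ card X * (1 - \<rho>) ^ (n - card X)" by simp
  qed
  finally show ?thesis by simp
qed

lemma card_small_subsets:
  fixes n r :: nat
  assumes rn: "2 * r \<le> n" and n: "n \<ge> 1"
  shows "real (card {S\<in>Pow {..<n}. card S \<le> r}) \<le> 2 powr (real n * bin_entropy (real r / real n))"
proof (cases "r = 0")
  case True
  have "{S\<in>Pow {..<n}. card S \<le> r} = {{}}" using True by (auto simp: finite_subset)
  then show ?thesis using True by (simp add: bin_entropy_def)
next
  case False
  define \<rho> where "\<rho> = real r / real n"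
  have n0: "real n > 0" using n by simp
  have r0: "\<rho> > 0" using False n0 by (simp add: \<rho>_def)
  have rh: "\<rho> \<le> 1/2" using rn n0 by (simp add: \<rho>_def field_simps)
  have r1: "\<rho> < 1" using rh by simp
  define c where "c = \<rho> ^ r * (1 - \<rho>) ^ (n - r)"
  have c0: "c > 0" using r0 r1 by (simp add: c_def)
  define F where "F = {S\<in>Pow {..<n}. card S \<le> r}"
  have fF: "finite F" by (simp add: F_def)
  have each: "c \<le> \<rho> ^ card S * (1 - \<rho>) ^ (n - card S)" if "S \<in> F" for S
  proof -
    define k where "k = card S"
    have kr: "k \<le> r" using that by (simp add: F_def k_def)
    have "c = \<rho> ^ k * \<rho> ^ (r - k) * (1 - \<rho>) ^ (n - r)"
      using kr by (simp add: c_def power_add[symmetric])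
    also have "\<dots> \<le> \<rho> ^ k * (1 - \<rho>) ^ (r - k) * (1 - \<rho>) ^ (n - r)"
      using r0 r1 rh by (intro mult_right_mono mult_left_mono power_mono) auto
    also have "\<dots> = \<rho> ^ k * (1 - \<rho>) ^ (n - k)"
      using kr rn by (simp add: mult.assoc power_add[symmetric])
    finally show ?thesis by (simp add: k_def)
  qed
  have "real (card F) * c = (\<Sum>S\<in>F. c)" by simp
  also have "\<dots> \<le> (\<Sum>S\<in>F. \<rho> ^ card S * (1 - \<rho>) ^ (n - card S))" by (rule sum_mono) (rule each)
  also have "\<dots> \<le> (\<Sum>S\<in>Pow {..<n}. \<rho> ^ card S * (1 - \<rho>) ^ (n - card S))"
    by (rule sum_mono2) (use r0 r1 in \<open>auto simp: F_def\<close>)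
  also have "\<dots> = 1" by (rule sum_binom_subsets)
  finally have cF: "real (card F) \<le> 1 / c" using c0 by (simp add: field_simps)
  have "log 2 (1 / c) = - (real r * log 2 \<rho> + real (n - r) * log 2 (1 - \<rho>))"
    using r0 r1 by (simp add: c_def log_divide log_mult log_nat_power)
  also have "\<dots> = real n * bin_entropy \<rho>"
  proof -
    have "real r = real n * \<rho>" using n0 by (simp add: \<rho>_def)
    moreover have "real (n - r) = real n * (1 - \<rho>)" using n0 rn by (simp add: \<rho>_def field_simps of_nat_diff)
    ultimately show ?thesis using r0 r1 by (simp add: bin_entropy_def algebra_simps)
  qed
  finally have L: "log 2 (1 / c) = real n * bin_entropy \<rho>" .
  have "2 powr (real n * bin_entropy \<rho>) = 2 powr (log 2 (1 / c))" by (simp only: L)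
  also have "\<dots> = 1 / c" using c0 by (intro powr_log_cancel) auto
  finally have "2 powr (real n * bin_entropy \<rho>) = 1 / c" .
  then show ?thesis using cF by (simp add: F_def \<rho>_def)
qed

lemma total_born:
  fixes W :: "'w set"
  assumes fW: "finite W" and sumM: "\<And>i j. i < d \<Longrightarrow> j < d \<Longrightarrow> (\<Sum>w\<in>W. M w i j) = Idm i j"
  shows "(\<Sum>ws\<in>lists_of W n. born_prob d n M ws v) = norm2 d n v"
proof -
  have "(\<Sum>ws\<in>lists_of W n. (\<Prod>i<n. (\<lambda>i w. 1::complex) i (ws!i)) * form d n (\<lambda>i. (\<lambda>i. M) i (ws!i)) v)
      = form d n (\<lambda>i x y. \<Sum>w\<in>W. 1 * M w x y) v"
    by (rule form_sum_lists[OF fW])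
  also have "\<dots> = form d n (\<lambda>i. Idm) v" by (rule form_cong) (simp add: sumM)
  also have "\<dots> = of_real (norm2 d n v)" by (rule form_Idm)
  finally have "(\<Sum>ws\<in>lists_of W n. form d n (\<lambda>i. M (ws!i)) v) = of_real (norm2 d n v)" by simp
  then show ?thesis unfolding born_form by (metis Re_complex_of_real Re_sum)
qed

lemma sum_norm2_proj:
  assumes h: "(\<Sum>x<d. cnj (\<theta> x) * \<theta> x) = 1"
  shows "(\<Sum>S\<in>Pow {..<n}. norm2 d n (opv d n (\<lambda>i. Kb \<theta> (i \<in> S)) v)) = norm2 d n v"
proof -
  have "complex_of_real (\<Sum>S\<in>Pow {..<n}. norm2 d n (opv d n (\<lambda>i. Kb \<theta> (i \<in> S)) v))
      = (\<Sum>S\<in>Pow {..<n}. form d n (\<lambda>i. Kb \<theta> (i \<in> S)) v)"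
    unfolding of_real_sum by (intro sum.cong refl) (simp add: form_K_norm2[OF h])
  also have "\<dots> = form d n (\<lambda>i. Idm) v" by (rule form_sum_Kb)
  also have "\<dots> = of_real (norm2 d n v)" by (rule form_Idm)
  finally show ?thesis by (simp only: of_real_eq_iff)
qed

lemma norm2_nonneg: "norm2 d n v \<ge> 0"
  unfolding norm2_def by (simp add: sum_nonneg)

lemma pow_as_powr: "y > 0 \<Longrightarrow> (y::real) ^ k = 2 powr (real k * log 2 y)"
proof -
  assume y: "y > 0"
  have "2 powr (real k * log 2 y) = (2 powr (log 2 y)) powr real k" by (simp add: powr_powr mult.commute)
  also have "\<dots> = y powr real k" using y by simp
  also have "\<dots> = y ^ k" using y by (simp add: powr_realpow)
  finally show ?thesis by simp
qed

lemma exp_le_2powr: "x \<ge> 0 \<Longrightarrow> exp (- x) \<le> 2 powr (- (x::real))"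
proof -
  assume x: "x \<ge> 0"
  have "2 powr (- x) = exp (- x * ln 2)" by (simp add: powr_def mult.commute)
  moreover have "- x \<le> - x * ln 2" using x ln_2_less_1 by (simp add: mult_left_le)
  ultimately show ?thesis by simp
qed

lemma main_single:
  fixes W :: "'w set" and M :: "'w \<Rightarrow> nat \<Rightarrow> nat \<Rightarrow> complex"
  assumes fW: "finite W"
    and B: "\<And>w x y. w \<in> W \<Longrightarrow> x < d \<Longrightarrow> y < d \<Longrightarrow> M w x y = (\<Sum>k<d. cnj (B w k x) * B w k y)"
    and psdM: "\<And>w. w \<in> W \<Longrightarrow> psd d (M w)"
    and sumM: "\<And>i j. i < d \<Longrightarrow> j < d \<Longrightarrow> (\<Sum>w\<in>W. M w i j) = Idm i j"
    and h: "(\<Sum>x<d. cnj (\<theta> x) * \<theta> x) = 1"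
    and n: "n \<ge> 1" and rn: "2 * r \<le> n" and dpos: "\<delta> > 0"
    and sp: "in_tspan d n (Vset d \<theta> n r) \<phi>" and nrm: "norm2 d n \<phi> = 1"
  shows "(\<Sum>ws\<in>{ws. length ws = n \<and> set ws \<subseteq> W \<and> l1_dist W (outcome_dist d M \<theta>) (rel_freq ws) > \<delta>}.
            born_prob d n M ws \<phi>)
         \<le> 2 powr (- real n * (\<delta>^2 / 4 - bin_entropy (real r / real n))
                   + real (card W) * log 2 (real n / 2 + 1))"
proof -
  define Bad where "Bad = {ws. length ws = n \<and> set ws \<subseteq> W \<and> l1_dist W (outcome_dist d M \<theta>) (rel_freq ws) > \<delta>}"
  define H where "H = bin_entropy (real r / real n)"
  define E where "E = - real n * (\<delta>^2 / 4 - H) + real (card W) * log 2 (real n / 2 + 1)"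
  have n0: "real n > 0" using n by simp
  have BadL: "Bad \<subseteq> lists_of W n" by (auto simp: Bad_def lists_of_def)
  have fL: "finite (lists_of W n)" using fW by (rule finite_lists_of)
  have fBad: "finite Bad" using BadL fL finite_subset by blast
  have bnn: "born_prob d n M ws v \<ge> 0" if "ws \<in> lists_of W n" for ws v
    using born_kraus[OF B that, where v=v] by (simp add: sum_nonneg)
  have lg: "log 2 (real n / 2 + 1) \<ge> 0" by simp
  show ?thesis
  proof (cases "real n * (\<delta> / 2)\<^sup>2 \<le> 2 * real r")
    case True
    have "H \<ge> 2 * (real r / real n)"
      unfolding H_def by (rule entropy_ge) (use rn n0 in \<open>auto simp: field_simps\<close>)
    also have "2 * (real r / real n) \<ge> \<delta>^2 / 4" using True n0 by (simp add: field_simps power2_eq_square)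
    finally have "\<delta>^2 / 4 - H \<le> 0" by simp
    then have "real n * (\<delta>^2 / 4 - H) \<le> 0" using n0 by (simp add: mult_nonneg_nonpos)
    moreover have "real (card W) * log 2 (real n / 2 + 1) \<ge> 0" using lg by simp
    ultimately have "E \<ge> 0" unfolding E_def by linarith
    then have R1: "2 powr E \<ge> 1" by (intro ge_one_powr_ge_zero) auto
    have "(\<Sum>ws\<in>Bad. born_prob d n M ws \<phi>) \<le> (\<Sum>ws\<in>lists_of W n. born_prob d n M ws \<phi>)"
      by (rule sum_mono2[OF fL BadL]) (auto intro: bnn)
    also have "\<dots> = 1" using total_born[OF fW sumM] nrm by simp
    finally show ?thesis using R1 by (simp add: Bad_def E_def H_def)
  next
    case False
    define F where "F = {S\<in>Pow {..<n}. card S \<le> r}"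
    define a where "a S = opv d n (\<lambda>i. Kb \<theta> (i \<in> S)) \<phi>" for S
    define AA where "AA = {A. A \<subseteq> W \<and> A \<noteq> {} \<and> card A \<le> n}"
    define e where "e = exp (- real n * (\<delta> / 2)\<^sup>2)"
    have fF: "finite F" by (simp add: F_def)
    have dec: "\<phi> ys = (\<Sum>S\<in>F. a S ys)" if "ys \<in> idx d n" for ys
      unfolding F_def a_def by (rule decomp_span[OF h sp that])
    have "(\<Sum>ws\<in>Bad. born_prob d n M ws \<phi>) \<le> (\<Sum>ws\<in>Bad. real (card F) * (\<Sum>S\<in>F. born_prob d n M ws (a S)))"
    proof (rule sum_mono)
      fix ws assume "ws \<in> Bad"
      then have ws: "ws \<in> lists_of W n" using BadL by blast
      show "born_prob d n M ws \<phi> \<le> real (card F) * (\<Sum>S\<in>F. born_prob d n M ws (a S))"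
        by (rule born_decomp[OF B ws fF]) (auto intro: dec)
    qed
    also have "\<dots> = real (card F) * (\<Sum>S\<in>F. \<Sum>ws\<in>Bad. born_prob d n M ws (a S))"
      by (simp add: sum_distrib_left sum.swap[of _ F])
    also have "\<dots> \<le> real (card F) * (\<Sum>S\<in>F. real (card AA) * e * norm2 d n (a S))"
    proof (intro mult_left_mono sum_mono)
      fix S assume S: "S \<in> F"
      have S1: "S \<subseteq> {..<n}" and S2: "card S \<le> r" using S by (auto simp: F_def)
      have st: "2 * real (card S) \<le> real n * (\<delta> / 2)\<^sup>2" using S2 False by simp
      have sn: "2 * card S \<le> n" using S2 rn by linarith
      show "(\<Sum>ws\<in>Bad. born_prob d n M ws (a S)) \<le> real (card AA) * e * norm2 d n (a S)"
        using bad_S[OF fW B psdM sumM h S1 n dpos sn st, where v=\<phi>]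
        unfolding Bad_def AA_def e_def a_def .
    qed simp
    also have "\<dots> = real (card F) * real (card AA) * e * (\<Sum>S\<in>F. norm2 d n (a S))"
      by (simp add: sum_distrib_left mult_ac)
    also have "\<dots> \<le> real (card F) * real (card AA) * e * (\<Sum>S\<in>Pow {..<n}. norm2 d n (a S))"
      by (intro mult_left_mono sum_mono2) (auto simp: F_def e_def norm2_nonneg)
    also have "(\<Sum>S\<in>Pow {..<n}. norm2 d n (a S)) = 1"
      unfolding a_def using sum_norm2_proj[OF h] nrm by simp
    also have "real (card F) * real (card AA) * e * 1
        \<le> 2 powr (real n * H) * 2 powr (real (card W) * log 2 (real n / 2 + 1)) * 2 powr (- real n * (\<delta>^2 / 4))"
    proof -
      have c1: "real (card F) \<le> 2 powr (real n * H)" unfolding F_def H_def by (rule card_small_subsets[OF rn n])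
      have "real (card AA) \<le> (real n / 2 + 1) ^ card W" unfolding AA_def by (rule card_AA[OF fW n])
      also have "\<dots> = 2 powr (real (card W) * log 2 (real n / 2 + 1))" by (rule pow_as_powr) simp
      finally have c2: "real (card AA) \<le> 2 powr (real (card W) * log 2 (real n / 2 + 1))" .
      have c3: "e \<le> 2 powr (- real n * (\<delta>^2 / 4))"
        using exp_le_2powr[of "real n * (\<delta> / 2)\<^sup>2"] by (simp add: e_def power_divide)
      show ?thesis using c1 c2 c3 by (simp add: mult_mono e_def)
    qed
    also have "\<dots> = 2 powr E" unfolding E_def by (simp add: powr_add[symmetric] algebra_simps)
    finally show ?thesis by (simp add: Bad_def E_def H_def)
  qed
qed

theorem corollary1:
  fixes d n r :: nat and \<theta> :: "nat \<Rightarrow> complex"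
    and W :: "'w set" and M :: "'w \<Rightarrow> nat \<Rightarrow> nat \<Rightarrow> complex"
    and K :: "'k set" and p :: "'k \<Rightarrow> real" and \<phi> :: "'k \<Rightarrow> nat list \<Rightarrow> complex"
    and \<delta> :: real
  assumes "d \<ge> 1"
    and "hinner d \<theta> \<theta> = 1"
    and "n \<ge> 1" and "2 * r \<le> n"
    and "finite K" and "\<forall>k\<in>K. p k \<ge> 0" and "(\<Sum>k\<in>K. p k) = 1"
    and "\<forall>k\<in>K. \<phi> k \<in> almost_power d \<theta> n r \<and> tinner d n (\<phi> k) (\<phi> k) = 1"
    and "is_POVM d W M"
    and "\<delta> > 0"
  shows "(\<Sum>ws\<in>{ws. length ws = n \<and> set ws \<subseteq> W \<and>
                    l1_dist W (outcome_dist d M \<theta>) (rel_freq ws) > \<delta>}.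
            \<Sum>k\<in>K. p k * born_prob d n M ws (\<phi> k))
         \<le> 2 powr (- real n * (\<delta>^2 / 4 - bin_entropy (real r / real n))
                   + real (card W) * log 2 (real n / 2 + 1))"
proof -
  note A = assms
  define RHS where "RHS = 2 powr (- real n * (\<delta>^2 / 4 - bin_entropy (real r / real n))
                   + real (card W) * log 2 (real n / 2 + 1))"
  define Bad where "Bad = {ws. length ws = n \<and> set ws \<subseteq> W \<and> l1_dist W (outcome_dist d M \<theta>) (rel_freq ws) > \<delta>}"
  have fW: "finite W" using A(9) by (simp add: is_POVM_def)
  have psdM: "psd d (M w)" if "w \<in> W" for w
    using A(9) that unfolding is_POVM_def psd_def qf_def by blast
  have sumM: "(\<Sum>w\<in>W. M w i j) = Idm i j" if "i < d" "j < d" for i j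
    using A(9) that unfolding is_POVM_def Idm_def by blast
  have "\<forall>w\<in>W. \<exists>B. \<forall>i<d. \<forall>j<d. M w i j = (\<Sum>k<d. cnj (B k i) * B k j)"
    using psd_kraus psdM by blast
  then obtain B where B0: "\<forall>w\<in>W. \<forall>i<d. \<forall>j<d. M w i j = (\<Sum>k<d. cnj (B w k i) * B w k j)"
    by (metis bchoice)
  have B: "\<And>w x y. w \<in> W \<Longrightarrow> x < d \<Longrightarrow> y < d \<Longrightarrow> M w x y = (\<Sum>k<d. cnj (B w k x) * B w k y)"
    using B0 by blast
  have h: "(\<Sum>x<d. cnj (\<theta> x) * \<theta> x) = 1" using A(2) by (simp add: hinner_def)
  have fBad: "finite Bad"
  proof (rule finite_subset)
    show "Bad \<subseteq> lists_of W n" by (auto simp: Bad_def lists_of_def)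
  qed (rule finite_lists_of[OF fW])
  have each: "(\<Sum>ws\<in>Bad. born_prob d n M ws (\<phi> k)) \<le> RHS" if k: "k \<in> K" for k
  proof -
    have sp: "in_tspan d n (Vset d \<theta> n r) (\<phi> k)" using A(8) k by (simp add: almost_power_def)
    have "complex_of_real (norm2 d n (\<phi> k)) = tinner d n (\<phi> k) (\<phi> k)"
      unfolding norm2_def tinner_def of_real_sum
      by (intro sum.cong refl) (simp add: complex_norm_square[symmetric] mult.commute)
    then have nrm: "norm2 d n (\<phi> k) = 1" using A(8) k by simp
    show ?thesis
      using main_single[OF fW B psdM sumM h A(3) A(4) A(10) sp nrm] unfolding Bad_def RHS_def .
  qed
  have "(\<Sum>ws\<in>Bad. \<Sum>k\<in>K. p k * born_prob d n M ws (\<phi> k)) = (\<Sum>k\<in>K. p k * (\<Sum>ws\<in>Bad. born_prob d n M ws (\<phi> k)))"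
    by (simp add: sum_distrib_left sum.swap[of _ K])
  also have "\<dots> \<le> (\<Sum>k\<in>K. p k * RHS)"
    using each A(6) by (intro sum_mono mult_left_mono) auto
  also have "\<dots> = RHS" using A(7) by (simp add: sum_distrib_right[symmetric])
  finally show ?thesis unfolding Bad_def RHS_def .
qed

end
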